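(* Let $G$, $K$, the faces $F_1,\dots,F_c$, the domain $\mathcal{D}_G$, the functions $\mathcal{A}_k$ and the sets $\mathcal{Q}(\vec q)$ be as in the context, and fix $\vec q=(q_1,\dots,q_c)\in\mathbb{Z}^c$. For every $\vec\varepsilon\in\mathcal{Q}(\vec q)$ there is a configuration $\theta\in\mathbb{R}^n$, unique up to the equivalence described in the context, such that for every edge $e$ and every bounded face $F_k$ whose counterclockwise boundary traversal passes through $e$ from vertex $a$ to vertex $b$, one has $\Delta_{ab}=\delta_k(e;\vec\varepsilon)$. This configuration is a stable fixed point with all angle differences in $[-\pi/2,\pi/2]$ and with winding vector $\vec q$. The resulting map from $\mathcal{Q}(\vec q)$ to the set of (equivalence classes of) stable fixed points with all angle differences in $[-\pi/2,\pi/2]$ and winding vector $\vec q$ is a bijection.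
   Context: Let $G$ be a finite connected planar graph with vertices $1,\dots,n$ and $m$ edges, such that every edge of $G$ lies on at least one cycle of $G$, and fix a planar embedding of $G$. Let $F_1,\dots,F_c$ ($c=m-n+1$) be the bounded faces of the embedding; each edge borders exactly two faces (possibly one of them the unbounded one). For $k\neq \ell$ let $m_{k\ell}$ be the number of edges bordering both $F_k$ and $F_\ell$, let $m_k$ be the number of edges bordering $F_k$ and the unbounded face, and let $n_k=m_k+\sum_{\ell\neq k}m_{k\ell}$ be the number of edges on the boundary of $F_k$. Fix a coupling constant $K>0$ and consider the Kuramoto model $\dot\theta_i=-K\sum_{j\sim i}\sin(\theta_i-\theta_j)$, $i=1,\dots,n$ ($j\sim i$ means $j$ is adjacent to $i$). A fixed point is $\theta\in\mathbb{R}^n$ with $\sum_{j\sim i}\sin(\theta_i-\theta_j)=0$ for all $i$; two configurations are considered equal if they differ by adding one common constant to all $\theta_i$ and/or integer multiples of $2\pi$ to individual $\theta_i$. For adjacent $i,j$, $\Delta_{ij}$ denotes $\theta_i-\theta_j$ reduced modulo $2\pi$ into $(-\pi,\pi]$ (so $\Delta_{ji}=-\Delta_{ij}$ unless $\Delta_{ij}=\pi$). The stability matrix $M$ has entries $M_{ij}=K\cos(\theta_i-\theta_j)$ if $i\sim j$, $M_{ii}=-\sum_{k\sim i}K\cos(\theta_i-\theta_k)$, and $M_{ij}=0$ otherwise; a fixed point is stable if $M$ is negative semidefinite. The winding vector of a fixed point is $\vec q=(q_1,\dots,q_c)$, where $q_k=\frac{1}{2\pi}\sum \Delta_{ab}$,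 the sum running over the edges of the boundary of $F_k$ traversed counterclockwise, each edge traversed from $a$ to $b$; each $q_k$ is an integer. Define $\mathcal{D}_G=\{\vec\varepsilon\in\mathbb{R}^c: |\varepsilon_k|\le 1 \text{ whenever } m_k>0,\ |\varepsilon_k-\varepsilon_\ell|\le 1\text{ whenever } m_{k\ell}>0\}$. For $\vec\varepsilon\in\mathcal{D}_G$, an edge $e$ and a bounded face $F_k$ bordered by $e$, set $\delta_k(e;\vec\varepsilon)=\arcsin(\varepsilon_k)$ if the other face bordered by $e$ is the unbounded face and $\delta_k(e;\vec\varepsilon)=\arcsin(\varepsilon_k-\varepsilon_\ell)$ if it is $F_\ell$. Define $\mathcal{A}_k(\vec\varepsilon)=m_k\arcsin(\varepsilon_k)+\sum_{\ell\neq k}m_{k\ell}\arcsin(\varepsilon_k-\varepsilon_\ell)$ and, for $\vec q\in\mathbb{Z}^c$, $\mathcal{Q}(\vec q)=\{\vec\varepsilon\in\mathcal{D}_G:\mathcal{A}_k(\vec\varepsilon)=2\pi q_k\text{ for all }k=1,\dots,c\}$. *)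

theory Defs
  imports Complex_Main
begin

definition simple_graph :: "nat \<Rightarrow> (nat \<Rightarrow> nat \<Rightarrow> bool) \<Rightarrow> bool" where
  "simple_graph n adj \<longleftrightarrow>
     (\<forall>a b. adj a b \<longrightarrow> adj b a \<and> a \<noteq> b \<and> a \<in> {1..n} \<and> b \<in> {1..n})"

definition nbrs :: "(nat \<Rightarrow> nat \<Rightarrow> bool) \<Rightarrow> nat \<Rightarrow> nat set" where
  "nbrs adj i = {j. adj i j}"

definition edges :: "(nat \<Rightarrow> nat \<Rightarrow> bool) \<Rightarrow> nat set set" where
  "edges adj = {{a, b} | a b. adj a b}"

definition connected_graph :: "nat \<Rightarrow> (nat \<Rightarrow> nat \<Rightarrow> bool) \<Rightarrow> bool" where
  "connected_graph n adj \<longleftrightarrow> n \<ge> 1 \<and>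
     (\<forall>a\<in>{1..n}. \<forall>b\<in>{1..n}. (a, b) \<in> {(x, y). adj x y}\<^sup>*)"

definition edge_on_cycle :: "(nat \<Rightarrow> nat \<Rightarrow> bool) \<Rightarrow> nat \<Rightarrow> nat \<Rightarrow> bool" where
  "edge_on_cycle adj a b \<longleftrightarrow>
     (\<exists>vs. length vs \<ge> 3 \<and> distinct vs \<and>
        (\<forall>i<length vs. adj (vs ! i) (vs ! ((i + 1) mod length vs))) \<and>
        (\<exists>i<length vs. vs ! i = a \<and> vs ! ((i + 1) mod length vs) = b))"

definition every_edge_on_cycle :: "(nat \<Rightarrow> nat \<Rightarrow> bool) \<Rightarrow> bool" where
  "every_edge_on_cycle adj \<longleftrightarrow> (\<forall>a b. adj a b \<longrightarrow> edge_on_cycle adj a b)"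

text \<open>Darts = directed edges (a,b). rot v is the cyclic (clockwise) order of the
  neighbours of v; the face permutation sends dart (a,b) to (b, rot b a), so each
  face orbit traverses its face with the face on the left, i.e. bounded faces are
  traversed counterclockwise.\<close>

definition darts :: "(nat \<Rightarrow> nat \<Rightarrow> bool) \<Rightarrow> (nat \<times> nat) set" where
  "darts adj = {(a, b). adj a b}"

definition rotation_system :: "nat \<Rightarrow> (nat \<Rightarrow> nat \<Rightarrow> bool) \<Rightarrow> (nat \<Rightarrow> nat \<Rightarrow> nat) \<Rightarrow> bool" where
  "rotation_system n adj rot \<longleftrightarrow>
     (\<forall>v\<in>{1..n}. bij_betw (rot v) (nbrs adj v) (nbrs adj v) \<and>
        (\<forall>x\<in>nbrs adj v. \<forall>y\<in>nbrs adj v. \<exists>k. (rot v ^^ k) x = y))"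

definition face_perm :: "(nat \<Rightarrow> nat \<Rightarrow> nat) \<Rightarrow> nat \<times> nat \<Rightarrow> nat \<times> nat" where
  "face_perm rot d = (snd d, rot (snd d) (fst d))"

definition face_orbit :: "(nat \<Rightarrow> nat \<Rightarrow> nat) \<Rightarrow> nat \<times> nat \<Rightarrow> (nat \<times> nat) set" where
  "face_orbit rot d = {(face_perm rot ^^ k) d | k. True}"

definition faces :: "(nat \<Rightarrow> nat \<Rightarrow> bool) \<Rightarrow> (nat \<Rightarrow> nat \<Rightarrow> nat) \<Rightarrow> (nat \<times> nat) set set" where
  "faces adj rot = face_orbit rot ` darts adj"

text \<open>Plane embedding with unbounded face Fout and bounded faces F 1, ..., F c,
  c = m - n + 1. Together with the rotation system this gives #faces = m - n + 2,
  i.e. genus 0 by Euler's formula (planarity). The case m = 0 (single vertex, no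
  faces as dart orbits) is allowed.\<close>
definition plane_embedding ::
  "nat \<Rightarrow> (nat \<Rightarrow> nat \<Rightarrow> bool) \<Rightarrow> (nat \<Rightarrow> nat \<Rightarrow> nat) \<Rightarrow> (nat \<times> nat) set \<Rightarrow> nat
     \<Rightarrow> (nat \<Rightarrow> (nat \<times> nat) set) \<Rightarrow> bool" where
  "plane_embedding n adj rot Fout c F \<longleftrightarrow>
     int c = int (card (edges adj)) - int n + 1 \<and>
     inj_on F {1..c} \<and> Fout \<notin> F ` {1..c} \<and>
     faces adj rot - {Fout} = F ` {1..c} \<and>
     (Fout \<in> faces adj rot \<or> edges adj = {})"

definition borders :: "nat set \<Rightarrow> (nat \<times> nat) set \<Rightarrow> bool" where
  "borders e Fc \<longleftrightarrow> (\<exists>(a, b)\<in>Fc. e = {a, b})"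

definition m_out :: "(nat \<Rightarrow> nat \<Rightarrow> bool) \<Rightarrow> (nat \<times> nat) set \<Rightarrow> (nat \<Rightarrow> (nat \<times> nat) set) \<Rightarrow> nat \<Rightarrow> nat" where
  "m_out adj Fout F k = card {e \<in> edges adj. borders e (F k) \<and> borders e Fout}"

definition m_pair :: "(nat \<Rightarrow> nat \<Rightarrow> bool) \<Rightarrow> (nat \<Rightarrow> (nat \<times> nat) set) \<Rightarrow> nat \<Rightarrow> nat \<Rightarrow> nat" where
  "m_pair adj F k l = card {e \<in> edges adj. borders e (F k) \<and> borders e (F l)}"

section \<open>The sets D_G, A_k, Q(q); vectors in R^c are functions vanishing outside 1..c\<close>

definition domain_D ::
  "(nat \<Rightarrow> nat \<Rightarrow> bool) \<Rightarrow> (nat \<times> nat) set \<Rightarrow> (nat \<Rightarrow> (nat \<times> nat) set) \<Rightarrow> nat \<Rightarrow> (nat \<Rightarrow> real) set" where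
  "domain_D adj Fout F c = {\<epsilon>. (\<forall>k. k \<notin> {1..c} \<longrightarrow> \<epsilon> k = 0) \<and>
      (\<forall>k\<in>{1..c}. m_out adj Fout F k > 0 \<longrightarrow> \<bar>\<epsilon> k\<bar> \<le> 1) \<and>
      (\<forall>k\<in>{1..c}. \<forall>l\<in>{1..c}. k \<noteq> l \<and> m_pair adj F k l > 0 \<longrightarrow> \<bar>\<epsilon> k - \<epsilon> l\<bar> \<le> 1)}"

definition calA ::
  "(nat \<Rightarrow> nat \<Rightarrow> bool) \<Rightarrow> (nat \<times> nat) set \<Rightarrow> (nat \<Rightarrow> (nat \<times> nat) set) \<Rightarrow> nat
     \<Rightarrow> (nat \<Rightarrow> real) \<Rightarrow> nat \<Rightarrow> real" where
  "calA adj Fout F c \<epsilon> k = real (m_out adj Fout F k) * arcsin (\<epsilon> k) +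
      (\<Sum>l\<in>{1..c} - {k}. real (m_pair adj F k l) * arcsin (\<epsilon> k - \<epsilon> l))"

definition calQ ::
  "(nat \<Rightarrow> nat \<Rightarrow> bool) \<Rightarrow> (nat \<times> nat) set \<Rightarrow> (nat \<Rightarrow> (nat \<times> nat) set) \<Rightarrow> nat
     \<Rightarrow> (nat \<Rightarrow> int) \<Rightarrow> (nat \<Rightarrow> real) set" where
  "calQ adj Fout F c q = {\<epsilon> \<in> domain_D adj Fout F c.
      \<forall>k\<in>{1..c}. calA adj Fout F c \<epsilon> k = 2 * pi * of_int (q k)}"

text \<open>Reduction modulo 2 pi into (-pi, pi].\<close>
definition wrap :: "real \<Rightarrow> real" where
  "wrap x = x - 2 * pi * of_int \<lceil>(x - pi) / (2 * pi)\<rceil>"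

definition Delta :: "(nat \<Rightarrow> real) \<Rightarrow> nat \<Rightarrow> nat \<Rightarrow> real" where
  "Delta \<theta> a b = wrap (\<theta> a - \<theta> b)"

definition edge_cond ::
  "(nat \<times> nat) set \<Rightarrow> (nat \<Rightarrow> (nat \<times> nat) set) \<Rightarrow> nat \<Rightarrow> (nat \<Rightarrow> real) \<Rightarrow> (nat \<Rightarrow> real) \<Rightarrow> bool" where
  "edge_cond Fout F c \<epsilon> \<theta> \<longleftrightarrow>
     (\<forall>k\<in>{1..c}. \<forall>(a, b)\<in>F k.
        (borders {a, b} Fout \<longrightarrow> Delta \<theta> a b = arcsin (\<epsilon> k)) \<and>
        (\<forall>l\<in>{1..c}. l \<noteq> k \<and> borders {a, b} (F l) \<longrightarrow> Delta \<theta> a b = arcsin (\<epsilon> k - \<epsilon> l)))"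

definition fixed_point :: "nat \<Rightarrow> (nat \<Rightarrow> nat \<Rightarrow> bool) \<Rightarrow> (nat \<Rightarrow> real) \<Rightarrow> bool" where
  "fixed_point n adj \<theta> \<longleftrightarrow> (\<forall>i\<in>{1..n}. (\<Sum>j\<in>nbrs adj i. sin (\<theta> i - \<theta> j)) = 0)"

definition stab_matrix :: "(nat \<Rightarrow> nat \<Rightarrow> bool) \<Rightarrow> real \<Rightarrow> (nat \<Rightarrow> real) \<Rightarrow> nat \<Rightarrow> nat \<Rightarrow> real" where
  "stab_matrix adj K \<theta> i j =
     (if adj i j then K * cos (\<theta> i - \<theta> j)
      else if i = j then - (\<Sum>k\<in>nbrs adj i. K * cos (\<theta> i - \<theta> k))
      else 0)"

definition stable :: "nat \<Rightarrow> (nat \<Rightarrow> nat \<Rightarrow> bool) \<Rightarrow> real \<Rightarrow> (nat \<Rightarrow> real) \<Rightarrow> bool" where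
  "stable n adj K \<theta> \<longleftrightarrow>
     (\<forall>x :: nat \<Rightarrow> real. (\<Sum>i\<in>{1..n}. \<Sum>j\<in>{1..n}. x i * stab_matrix adj K \<theta> i j * x j) \<le> 0)"

definition angles_bounded :: "(nat \<Rightarrow> nat \<Rightarrow> bool) \<Rightarrow> (nat \<Rightarrow> real) \<Rightarrow> bool" where
  "angles_bounded adj \<theta> \<longleftrightarrow> (\<forall>a b. adj a b \<longrightarrow> - (pi / 2) \<le> Delta \<theta> a b \<and> Delta \<theta> a b \<le> pi / 2)"

definition winding :: "(nat \<Rightarrow> (nat \<times> nat) set) \<Rightarrow> (nat \<Rightarrow> real) \<Rightarrow> nat \<Rightarrow> real" where
  "winding F \<theta> k = (\<Sum>(a, b)\<in>F k. Delta \<theta> a b) / (2 * pi)"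

definition has_winding :: "nat \<Rightarrow> (nat \<Rightarrow> (nat \<times> nat) set) \<Rightarrow> (nat \<Rightarrow> real) \<Rightarrow> (nat \<Rightarrow> int) \<Rightarrow> bool" where
  "has_winding c F \<theta> q \<longleftrightarrow> (\<forall>k\<in>{1..c}. winding F \<theta> k = of_int (q k))"

definition cfg_equiv :: "nat \<Rightarrow> (nat \<Rightarrow> real) \<Rightarrow> (nat \<Rightarrow> real) \<Rightarrow> bool" where
  "cfg_equiv n \<theta> \<theta>' \<longleftrightarrow> (\<exists>C. \<forall>i\<in>{1..n}. \<exists>z :: int. \<theta>' i = \<theta> i + C + 2 * pi * of_int z)"

definition cfg_rel :: "nat \<Rightarrow> ((nat \<Rightarrow> real) \<times> (nat \<Rightarrow> real)) set" where
  "cfg_rel n = {(\<theta>, \<theta>'). cfg_equiv n \<theta> \<theta>'}"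

end

theory Submission
  imports Defs "HOL-Library.Function_Algebras"
begin

interpretation fv: vector_space "\<lambda>(r::real) (f::'a \<Rightarrow> real) x. r * f x"
  by unfold_locales (auto simp: fun_eq_iff algebra_simps)

lemma sum_fun_apply': "finite I \<Longrightarrow> (\<Sum>i\<in>I. f i) x = (\<Sum>i\<in>I. (f i) x)"
  by (induction I rule: finite_induct) auto

lemma fam_bound:
  fixes u :: "'i \<Rightarrow> 'a \<Rightarrow> real"
  assumes I: "finite I" and S: "finite S"
    and sp: "\<And>i. i \<in> I \<Longrightarrow> u i \<in> fv.span S"
    and ind: "\<And>a. (\<forall>x. (\<Sum>i\<in>I. a i * u i x) = 0) \<Longrightarrow> (\<forall>i\<in>I. a i = 0)"
  shows "card I \<le> card S"
proof -
  have inj: "inj_on u I"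
  proof (rule inj_onI, rule ccontr)
    fix i j assume ij: "i \<in> I" "j \<in> I" "u i = u j" "i \<noteq> j"
    let ?a = "\<lambda>k. if k = i then 1 else if k = j then -1 else (0::real)"
    have "\<forall>x. (\<Sum>k\<in>I. ?a k * u k x) = 0"
    proof
      fix x
      have "(\<Sum>k\<in>I. ?a k * u k x) = (\<Sum>k\<in>{i,j}. ?a k * u k x)"
        using I ij by (intro sum.mono_neutral_right) auto
      also have "\<dots> = 0" using ij by simp
      finally show "(\<Sum>k\<in>I. ?a k * u k x) = 0" .
    qed
    from ind[OF this] ij show False by auto
  qed
  have "fv.independent (u ` I)"
  proof
    assume "fv.dependent (u ` I)"
    then obtain w where w: "\<exists>v\<in>u ` I. w v \<noteq> 0" "(\<Sum>v\<in>u ` I. (\<lambda>x. w v * v x)) = 0"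
      using fv.dependent_finite[of "u ` I"] I by auto
    have "\<forall>x. (\<Sum>i\<in>I. w (u i) * u i x) = 0"
    proof
      fix x
      have "(\<Sum>i\<in>I. w (u i) * u i x) = (\<Sum>v\<in>u ` I. w v * v x)"
        using sum.reindex[OF inj, of "\<lambda>v. w v * v x"] by simp
      also have "\<dots> = (\<Sum>v\<in>u ` I. (\<lambda>x. w v * v x)) x"
        using I by (simp add: sum_fun_apply')
      also have "\<dots> = 0" using w(2) by simp
      finally show "(\<Sum>i\<in>I. w (u i) * u i x) = 0" .
    qed
    from ind[OF this] w(1) show False by auto
  qed
  moreover have "u ` I \<subseteq> fv.span S" using sp by auto
  ultimately have "card (u ` I) \<le> card S"
    using fv.independent_span_bound[OF S] by blast
  thus ?thesis using card_image[OF inj] by simp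
qed

definition rv :: "nat \<times> nat \<Rightarrow> nat \<times> nat" where "rv d = (snd d, fst d)"

lemma rv_rv[simp]: "rv (rv d) = d" by (simp add: rv_def)
lemma rv_pair[simp]: "rv (a, b) = (b, a)" by (simp add: rv_def)
lemma inj_rv: "inj rv" by (metis injI rv_rv)

lemma funpow_inj_on:
  assumes "inj_on f A" "f ` A \<subseteq> A" "x \<in> A" "y \<in> A" "(f ^^ k) x = (f ^^ k) y"
  shows "x = y"
  using assms(3-5)
proof (induction k arbitrary: x y)
  case 0 then show ?case by simp
next
  case (Suc k)
  have "(f ^^ k) (f x) = (f ^^ k) (f y)" using Suc.prems by (simp add: funpow_Suc_right del: funpow.simps)
  moreover have "f x \<in> A" "f y \<in> A" using Suc.prems assms(2) by auto
  ultimately have "f x = f y" using Suc.IH by blast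
  thus ?case using assms(1) Suc.prems by (auto dest: inj_onD)
qed

lemma funpow_in: "f ` A \<subseteq> A \<Longrightarrow> x \<in> A \<Longrightarrow> (f ^^ k) x \<in> A"
  by (induction k) auto

lemma funpow_period:
  assumes inj: "inj_on f A" and sub: "f ` A \<subseteq> A" and fin: "finite A" and x: "x \<in> A"
  shows "\<exists>p>0. (f ^^ p) x = x"
proof -
  let ?g = "\<lambda>k. (f ^^ k) x"
  have "\<not> inj_on ?g {..card A}"
  proof
    assume "inj_on ?g {..card A}"
    moreover have "?g ` {..card A} \<subseteq> A" using funpow_in[OF sub x] by auto
    ultimately have "card {..card A} \<le> card A" using card_inj_on_le fin by blast
    thus False by simp
  qed
  then obtain i j where ij: "i \<le> card A" "j \<le> card A" "i \<noteq> j" "?g i = ?g j"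
    unfolding inj_on_def by auto
  have "\<exists>i j. i < j \<and> ?g i = ?g j"
  proof (cases "i < j")
    case True then show ?thesis using ij by blast
  next
    case False then have "j < i" using ij by simp
    then show ?thesis using ij by metis
  qed
  then obtain i j where ij: "i < j" "?g i = ?g j" by blast
  have jj: "j = i + (j - i)" using ij by simp
  have "(f ^^ i) ((f ^^ (j - i)) x) = (f ^^ (i + (j - i))) x" by (simp add: funpow_add)
  also have "\<dots> = (f ^^ i) x" using jj ij(2) by simp
  finally have "(f ^^ i) ((f ^^ (j - i)) x) = (f ^^ i) x" .
  hence "(f ^^ (j - i)) x = x" using funpow_inj_on[OF inj sub funpow_in[OF sub x] x] by blast
  moreover have "j - i > 0" using ij by simp
  ultimately show ?thesis by blast
qed

lemma funpow_mult_period: "(f ^^ p) x = x \<Longrightarrow> (f ^^ (p * m)) x = x"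
  by (induction m) (auto simp: funpow_add)

locale pl =
  fixes n c :: nat and adj :: "nat \<Rightarrow> nat \<Rightarrow> bool" and rot :: "nat \<Rightarrow> nat \<Rightarrow> nat"
    and Fout :: "(nat \<times> nat) set" and F :: "nat \<Rightarrow> (nat \<times> nat) set"
  assumes simple: "simple_graph n adj"
    and conn: "connected_graph n adj"
    and cyc: "every_edge_on_cycle adj"
    and rs: "rotation_system n adj rot"
    and pe: "plane_embedding n adj rot Fout c F"
    and nonempty: "darts adj \<noteq> {}"
begin

abbreviation "D \<equiv> darts adj"
abbreviation "fp \<equiv> face_perm rot"
abbreviation "face \<equiv> face_orbit rot"

lemma adj_sym: "adj a b \<Longrightarrow> adj b a" using simple unfolding simple_graph_def by blast
lemma adj_range: "adj a b \<Longrightarrow> a \<in> {1..n} \<and> b \<in> {1..n} \<and> a \<noteq> b"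
  using simple unfolding simple_graph_def by blast

lemma D_iff: "d \<in> D \<longleftrightarrow> adj (fst d) (snd d)" by (cases d) (simp add: darts_def)

lemma D_sub: "D \<subseteq> {1..n} \<times> {1..n}" using adj_range by (auto simp: D_iff)
lemma finite_D: "finite D" using D_sub finite_subset by blast
lemma rv_D: "d \<in> D \<Longrightarrow> rv d \<in> D" by (simp add: D_iff rv_def adj_sym)
lemma rv_D_iff: "rv d \<in> D \<longleftrightarrow> d \<in> D" using rv_D rv_rv by metis
lemma rv_neq: "d \<in> D \<Longrightarrow> rv d \<noteq> d" using adj_range by (cases d) (auto simp: D_iff)

lemma nbrs_iff: "x \<in> nbrs adj v \<longleftrightarrow> adj v x" by (simp add: nbrs_def)
lemma nbrs_sub: "nbrs adj v \<subseteq> {1..n}" using adj_range by (auto simp: nbrs_def)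
lemma finite_nbrs: "finite (nbrs adj v)" using nbrs_sub finite_subset by blast
lemma nbrs_out: "v \<notin> {1..n} \<Longrightarrow> nbrs adj v = {}" using adj_range by (auto simp: nbrs_def)

lemma rot_bij: "bij_betw (rot v) (nbrs adj v) (nbrs adj v)"
proof (cases "v \<in> {1..n}")
  case True then show ?thesis using rs unfolding rotation_system_def by blast
next
  case False then show ?thesis using nbrs_out[OF False] by (simp add: bij_betw_def)
qed

lemma rot_cyc: "x \<in> nbrs adj v \<Longrightarrow> y \<in> nbrs adj v \<Longrightarrow> \<exists>k. (rot v ^^ k) x = y"
  using rs nbrs_out unfolding rotation_system_def by (cases "v \<in> {1..n}") auto

lemma fp_pair[simp]: "fp (a, b) = (b, rot b a)" by (simp add: face_perm_def)

lemma fp_D: "d \<in> D \<Longrightarrow> fp d \<in> D"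
proof -
  assume d: "d \<in> D"
  obtain a b where ab: "d = (a, b)" by fastforce
  have "a \<in> nbrs adj b" using d ab adj_sym by (simp add: D_iff nbrs_iff)
  hence "rot b a \<in> nbrs adj b" using rot_bij[of b] bij_betwE by blast
  thus ?thesis using ab by (simp add: D_iff nbrs_iff)
qed

lemma fp_inj: "inj_on fp D"
proof (rule inj_onI)
  fix d d' assume dd: "d \<in> D" "d' \<in> D" "fp d = fp d'"
  obtain a b a' b' where ab: "d = (a, b)" "d' = (a', b')" by fastforce
  have bb: "b = b'" and r: "rot b a = rot b a'" using dd ab by auto
  have "a \<in> nbrs adj b" "a' \<in> nbrs adj b" using dd ab bb adj_sym by (auto simp: D_iff nbrs_iff)
  hence "a = a'" using r rot_bij[of b] by (auto simp: bij_betw_def dest: inj_onD)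
  thus "d = d'" using ab bb by simp
qed

lemma fp_sub: "fp ` D \<subseteq> D" using fp_D by blast

lemma fp_bij: "bij_betw fp D D"
  using fp_inj fp_sub endo_inj_surj[OF finite_D fp_sub fp_inj] by (simp add: bij_betw_def)

lemma fpk_D: "d \<in> D \<Longrightarrow> (fp ^^ k) d \<in> D" using funpow_in[OF fp_sub] by blast

lemma face_def': "face d = {(fp ^^ k) d | k. True}" by (simp add: face_orbit_def)

lemma face_sub: "d \<in> D \<Longrightarrow> face d \<subseteq> D" unfolding face_def' using fpk_D by blast
lemma face_self: "d \<in> face d" unfolding face_def' by (metis (mono_tags, lifting) funpow_0 mem_Collect_eq)
lemma face_fpk: "(fp ^^ k) d \<in> face d" unfolding face_def' by blast

lemma face_sub_mem: "d' \<in> face d \<Longrightarrow> face d' \<subseteq> face d"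
proof
  fix x assume "d' \<in> face d" "x \<in> face d'"
  then obtain k j where "d' = (fp ^^ k) d" "x = (fp ^^ j) d'" by (auto simp: face_def')
  hence "x = (fp ^^ (j + k)) d" by (simp add: funpow_add)
  thus "x \<in> face d" by (simp add: face_fpk)
qed

lemma face_mem: assumes d: "d \<in> D" and m: "d' \<in> face d" shows "face d' = face d"
proof
  show "face d' \<subseteq> face d" using face_sub_mem[OF m] .
  obtain k where k: "d' = (fp ^^ k) d" using m by (auto simp: face_def')
  obtain p where p: "p > 0" "(fp ^^ p) d = d" using funpow_period[OF fp_inj fp_sub finite_D d] by blast
  have "k \<le> p * k" using p by simp
  have "(fp ^^ (p * k - k)) d' = (fp ^^ (p * k - k + k)) d" using k by (simp add: funpow_add)
  also have "\<dots> = d" using \<open>k \<le> p * k\<close> funpow_mult_period[OF p(2)] by simp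
  finally have "d \<in> face d'" by (metis face_fpk)
  thus "face d \<subseteq> face d'" by (rule face_sub_mem)
qed

lemma face_fp: "d \<in> D \<Longrightarrow> face (fp d) = face d"
  using face_mem[of d "fp d"] face_fpk[of 1 d] by simp

lemma face_eq_iff: "d \<in> D \<Longrightarrow> d' \<in> D \<Longrightarrow> d' \<in> face d \<longleftrightarrow> face d' = face d"
  using face_mem face_self by metis

lemma face_inter: "d \<in> D \<Longrightarrow> d' \<in> D \<Longrightarrow> x \<in> face d \<Longrightarrow> x \<in> face d' \<Longrightarrow> face d = face d'"
  using face_mem by metis

lemma fp_face: "d \<in> D \<Longrightarrow> x \<in> face d \<Longrightarrow> fp x \<in> face d"
  using face_fp face_sub face_self face_mem by (metis subsetD)

lemma fp_face_bij: "d \<in> D \<Longrightarrow> bij_betw fp (face d) (face d)"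
proof -
  assume d: "d \<in> D"
  have fin: "finite (face d)" using face_sub[OF d] finite_D finite_subset by blast
  have sub: "fp ` face d \<subseteq> face d" using fp_face[OF d] by blast
  have inj: "inj_on fp (face d)" using fp_inj face_sub[OF d] inj_on_subset by blast
  show ?thesis using endo_inj_surj[OF fin sub inj] inj by (simp add: bij_betw_def)
qed

lemma face_sum_fst_snd:
  assumes d: "d \<in> D"
  shows "(\<Sum>x\<in>face d. g (snd x)) = (\<Sum>x\<in>face d. (g :: nat \<Rightarrow> real) (fst x))"
proof -
  have "(\<Sum>x\<in>face d. g (fst x)) = (\<Sum>x\<in>face d. g (fst (fp x)))"
    using sum.reindex_bij_betw[OF fp_face_bij[OF d], of "\<lambda>x. g (fst x)"] by simp
  also have "\<dots> = (\<Sum>x\<in>face d. g (snd x))" by (simp add: face_perm_def)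
  finally show ?thesis by simp
qed

lemma finite_face: "d \<in> D \<Longrightarrow> finite (face d)" using face_sub finite_D finite_subset by blast

end

definition chi :: "nat \<times> nat \<Rightarrow> nat \<times> nat \<Rightarrow> real" where
  "chi d0 = (\<lambda>d. (if d = d0 then 1 else 0) - (if d = rv d0 then 1 else 0))"

context pl begin

lemma edges_D: "edges adj = (\<lambda>d. {fst d, snd d}) ` D"
proof
  show "edges adj \<subseteq> (\<lambda>d. {fst d, snd d}) ` D"
  proof
    fix e assume "e \<in> edges adj"
    then obtain a b where "e = {a, b}" "adj a b" by (auto simp: edges_def)
    thus "e \<in> (\<lambda>d. {fst d, snd d}) ` D" by (intro image_eqI[of _ _ "(a,b)"]) (auto simp: D_iff)
  qed
next
  show "(\<lambda>d. {fst d, snd d}) ` D \<subseteq> edges adj"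
  proof
    fix e assume "e \<in> (\<lambda>d. {fst d, snd d}) ` D"
    then obtain d where d: "d \<in> D" "e = {fst d, snd d}" by auto
    have "adj (fst d) (snd d)" using d D_iff by blast
    thus "e \<in> edges adj" unfolding edges_def using d(2) by blast
  qed
qed

lemma edges_ne: "edges adj \<noteq> {}" using nonempty edges_D by simp

lemma Fout_face: "Fout \<in> faces adj rot" using pe edges_ne unfolding plane_embedding_def by blast

lemma faces_eq: "faces adj rot = insert Fout (F ` {1..c})"
  using pe Fout_face unfolding plane_embedding_def by blast

lemma F_inj: "inj_on F {1..c}" using pe unfolding plane_embedding_def by blast
lemma F_neq_Fout: "k \<in> {1..c} \<Longrightarrow> F k \<noteq> Fout" using pe unfolding plane_embedding_def by blast
lemma F_eq_iff: "k \<in> {1..c} \<Longrightarrow> l \<in> {1..c} \<Longrightarrow> F k = F l \<longleftrightarrow> k = l"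
  using F_inj by (auto dest: inj_onD)

lemma faces_face: "g \<in> faces adj rot \<longleftrightarrow> (\<exists>d\<in>D. g = face d)"
  by (auto simp: faces_def)

lemma F_face: "k \<in> {1..c} \<Longrightarrow> \<exists>d\<in>D. F k = face d"
  using faces_eq faces_face by blast

lemma Fout_face': "\<exists>d\<in>D. Fout = face d" using Fout_face faces_face by blast

lemma dart_face: "d \<in> D \<Longrightarrow> face d = Fout \<or> (\<exists>k\<in>{1..c}. face d = F k)"
proof -
  assume "d \<in> D"
  hence "face d \<in> faces adj rot" using faces_face by blast
  thus ?thesis using faces_eq by auto
qed

lemma face_set_iff: assumes "d0 \<in> D" shows "x \<in> face d0 \<longleftrightarrow> x \<in> D \<and> face x = face d0"
  using assms face_sub face_mem face_self by blast

lemma in_F_iff: "k \<in> {1..c} \<Longrightarrow> x \<in> F k \<longleftrightarrow> x \<in> D \<and> face x = F k"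
  using F_face face_set_iff by metis

lemma in_Fout_iff: "x \<in> Fout \<longleftrightarrow> x \<in> D \<and> face x = Fout"
  using Fout_face' face_set_iff by metis

lemma finite_F: "k \<in> {1..c} \<Longrightarrow> finite (F k)" using F_face finite_face by metis

definition "Dp = {d \<in> D. fst d < snd d}"

lemma card_Dp: "card Dp = card (edges adj)"
proof -
  have "inj_on (\<lambda>d. {fst d, snd d}) Dp"
    by (rule inj_onI) (auto simp: Dp_def doubleton_eq_iff)
  moreover have "(\<lambda>d. {fst d, snd d}) ` Dp = edges adj"
  proof
    show "(\<lambda>d. {fst d, snd d}) ` Dp \<subseteq> edges adj" using edges_D Dp_def by auto
  next
    show "edges adj \<subseteq> (\<lambda>d. {fst d, snd d}) ` Dp"
    proof
      fix e assume "e \<in> edges adj"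
      then obtain d where d: "d \<in> D" "e = {fst d, snd d}" using edges_D by auto
      show "e \<in> (\<lambda>d. {fst d, snd d}) ` Dp"
      proof (cases "fst d < snd d")
        case True then show ?thesis using d by (auto simp: Dp_def)
      next
        case False
        hence "fst (rv d) < snd (rv d)" using rv_neq[OF d(1)] by (cases d) auto
        moreover have "e = {fst (rv d), snd (rv d)}" using d by (auto simp: rv_def)
        ultimately show ?thesis using rv_D[OF d(1)] by (auto simp: Dp_def)
      qed
    qed
  qed
  ultimately show ?thesis by (metis card_image)
qed

lemma finite_Dp: "finite Dp" using finite_D by (simp add: Dp_def)

lemma c_eq: "c + n = card (edges adj) + 1"
  using pe unfolding plane_embedding_def by linarith

definition Wv :: "(nat \<times> nat \<Rightarrow> real) \<Rightarrow> bool" where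
  "Wv \<phi> \<longleftrightarrow> (\<forall>d. d \<notin> D \<longrightarrow> \<phi> d = 0) \<and> (\<forall>d. \<phi> (rv d) = - \<phi> d)"

lemma W_span: assumes W: "Wv \<phi>" shows "\<phi> \<in> fv.span (chi ` Dp)"
proof -
  have eq: "\<phi> = (\<Sum>d\<in>Dp. (\<lambda>x. \<phi> d * chi d x))"
  proof
    fix x
    have "(\<Sum>d\<in>Dp. (\<lambda>x. \<phi> d * chi d x)) x = (\<Sum>d\<in>Dp. \<phi> d * chi d x)"
      by (rule sum_fun_apply'[OF finite_Dp])
    also have "\<dots> = \<phi> x"
    proof (cases "x \<in> D")
      case False
      have "\<And>d. d \<in> Dp \<Longrightarrow> chi d x = 0"
      proof -
        fix d assume "d \<in> Dp"
        hence "d \<in> D" by (simp add: Dp_def)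
        hence "d \<noteq> x" "rv d \<noteq> x" using False rv_D[of d] by auto
        thus "chi d x = 0" by (simp add: chi_def)
      qed
      hence s0: "(\<Sum>d\<in>Dp. \<phi> d * chi d x) = 0" by (intro sum.neutral) simp
      have "\<phi> x = 0" using W False unfolding Wv_def by blast
      thus ?thesis using s0 by linarith
    next
      case True
      show ?thesis
      proof (cases "fst x < snd x")
        case lt: True
        have "x \<in> Dp" using True lt by (simp add: Dp_def)
        have "(\<Sum>d\<in>Dp. \<phi> d * chi d x) = (\<Sum>d\<in>{x}. \<phi> d * chi d x)"
        proof (rule sum.mono_neutral_right)
          show "\<forall>d\<in>Dp - {x}. \<phi> d * chi d x = 0"
            using lt by (auto simp: chi_def Dp_def rv_def)
        qed (use finite_Dp \<open>x \<in> Dp\<close> in auto)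
        also have "\<dots> = \<phi> x" using rv_neq[OF True] by (simp add: chi_def)
        finally show ?thesis .
      next
        case ge: False
        have "fst x \<noteq> snd x" using rv_neq[OF True] by (cases x) auto
        hence gt: "fst (rv x) < snd (rv x)" using ge by (simp add: rv_def)
        have "rv x \<in> Dp" using gt rv_D[OF True] by (simp add: Dp_def)
        have "(\<Sum>d\<in>Dp. \<phi> d * chi d x) = (\<Sum>d\<in>{rv x}. \<phi> d * chi d x)"
        proof (rule sum.mono_neutral_right)
          show "\<forall>d\<in>Dp - {rv x}. \<phi> d * chi d x = 0"
            using ge by (auto simp: chi_def Dp_def rv_def)
        qed (use finite_Dp \<open>rv x \<in> Dp\<close> in auto)
        also have "\<dots> = \<phi> (rv x) * chi (rv x) x" by simp
        also have "chi (rv x) x = -1" using rv_neq[OF True] by (simp add: chi_def)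
        also have "\<phi> (rv x) = - \<phi> x" using W unfolding Wv_def by blast
        also have "- \<phi> x * -1 = \<phi> x" by simp
        finally show ?thesis .
      qed
    qed
    finally show "\<phi> x = (\<Sum>d\<in>Dp. (\<lambda>x. \<phi> d * chi d x)) x" by (rule sym)
  qed
  have "(\<Sum>d\<in>Dp. (\<lambda>x. \<phi> d * chi d x)) \<in> fv.span (chi ` Dp)"
  proof (rule fv.span_sum)
    fix d assume "d \<in> Dp"
    hence "chi d \<in> fv.span (chi ` Dp)" by (intro fv.span_base) simp
    thus "(\<lambda>x. \<phi> d * chi d x) \<in> fv.span (chi ` Dp)" by (rule fv.span_scale)
  qed
  thus ?thesis using eq by simp
qed

lemma card_chi: "card (chi ` Dp) \<le> card (edges adj)"
  using card_image_le[OF finite_Dp, of chi] card_Dp by simp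

lemma finite_chi: "finite (chi ` Dp)" using finite_Dp by simp

definition dv :: "(nat \<times> nat \<Rightarrow> real) \<Rightarrow> nat \<Rightarrow> real" where
  "dv \<phi> v = (\<Sum>u\<in>nbrs adj v. \<phi> (v, u))"

definition bnd :: "((nat \<times> nat) set \<Rightarrow> real) \<Rightarrow> nat \<times> nat \<Rightarrow> real" where
  "bnd L = (\<lambda>d. if d \<in> D then L (face d) - L (face (rv d)) else 0)"

definition lam :: "(nat \<Rightarrow> real) \<Rightarrow> (nat \<times> nat) set \<Rightarrow> real" where
  "lam a = (\<lambda>g. \<Sum>k\<in>{1..c}. if g = F k then a k else 0)"

lemma lam_F: "k \<in> {1..c} \<Longrightarrow> lam a (F k) = a k"
proof -
  assume k: "k \<in> {1..c}"
  have "lam a (F k) = (\<Sum>j\<in>{k}. if F k = F j then a j else 0)"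
    unfolding lam_def
  proof (rule sum.mono_neutral_right)
    show "\<forall>j\<in>{1..c} - {k}. (if F k = F j then a j else 0) = 0"
    proof
      fix j assume "j \<in> {1..c} - {k}"
      hence "F k \<noteq> F j" using F_eq_iff[OF k, of j] by auto
      thus "(if F k = F j then a j else 0) = 0" by simp
    qed
  qed (use k in auto)
  thus ?thesis by simp
qed

lemma lam_Fout: "lam a Fout = 0"
  unfolding lam_def by (rule sum.neutral) (metis F_neq_Fout)

lemma bnd_W: "Wv (bnd L)" unfolding Wv_def bnd_def by (auto simp: rv_D_iff)

lemma fp_rv: "fp (rv (v, u)) = (v, rot v u)" by simp

lemma face_rv_out: "(u, v) \<in> D \<Longrightarrow> face (u, v) = face (v, rot v u)"
  using face_fp[of "(u,v)"] by simp

lemma bnd_vu: "u \<in> nbrs adj v \<Longrightarrow> bnd L (v, u) = L (face (v, u)) - L (face (v, rot v u))"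
proof -
  assume u: "u \<in> nbrs adj v"
  have "(v, u) \<in> D" "(u, v) \<in> D" using u adj_sym by (auto simp only: D_iff nbrs_iff fst_conv snd_conv)
  thus ?thesis unfolding bnd_def using face_rv_out[of u v] by simp
qed

lemma bnd_div: "dv (bnd L) v = 0"
proof -
  have "dv (bnd L) v = (\<Sum>u\<in>nbrs adj v. L (face (v, u)) - L (face (v, rot v u)))"
    unfolding dv_def by (rule sum.cong[OF refl]) (rule bnd_vu)
  also have "\<dots> = (\<Sum>u\<in>nbrs adj v. L (face (v, u))) - (\<Sum>u\<in>nbrs adj v. L (face (v, rot v u)))"
    by (rule sum_subtractf)
  also have "(\<Sum>u\<in>nbrs adj v. L (face (v, rot v u))) = (\<Sum>u\<in>nbrs adj v. L (face (v, u)))"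
    using sum.reindex_bij_betw[OF rot_bij[of v], of "\<lambda>u. L (face (v, u))"] by simp
  finally show ?thesis by simp
qed

end

context pl begin

lemma W_sum:
  assumes "finite I" "\<And>i. i \<in> I \<Longrightarrow> Wv (u i)"
  shows "Wv (\<lambda>x. \<Sum>i\<in>I. a i * u i x)"
proof -
  have z0: "\<And>x i. x \<notin> D \<Longrightarrow> i \<in> I \<Longrightarrow> u i x = 0" using assms(2) unfolding Wv_def by blast
  have z: "\<And>x. x \<notin> D \<Longrightarrow> (\<Sum>i\<in>I. a i * u i x) = 0"
    using z0 by (intro sum.neutral) simp
  have r: "\<And>x. (\<Sum>i\<in>I. a i * u i (rv x)) = - (\<Sum>i\<in>I. a i * u i x)"
  proof -
    fix x
    have r0: "\<And>i. i \<in> I \<Longrightarrow> u i (rv x) = - u i x" using assms(2) unfolding Wv_def by blast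
    have "(\<Sum>i\<in>I. a i * u i (rv x)) = (\<Sum>i\<in>I. - (a i * u i x))"
      using r0 by (intro sum.cong) auto
    thus "(\<Sum>i\<in>I. a i * u i (rv x)) = - (\<Sum>i\<in>I. a i * u i x)" by (simp add: sum_negf)
  qed
  show ?thesis unfolding Wv_def using z r by blast
qed

lemma dv_sum:
  assumes "finite I"
  shows "dv (\<lambda>x. \<Sum>i\<in>I. a i * u i x) w = (\<Sum>i\<in>I. a i * dv (u i) w)"
  unfolding dv_def by (simp add: sum_distrib_left sum.swap[of _ I])

lemma chi_W: "e \<in> D \<Longrightarrow> Wv (chi e)"
proof -
  assume e: "e \<in> D"
  have "\<And>x. x \<notin> D \<Longrightarrow> chi e x = 0"
  proof -
    fix x assume "x \<notin> D"
    hence "x \<noteq> e" "x \<noteq> rv e" using e rv_D[OF e] by auto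
    thus "chi e x = 0" by (simp add: chi_def)
  qed
  moreover have "\<And>x. chi e (rv x) = - chi e x"
  proof -
    fix x
    have "rv x = e \<longleftrightarrow> x = rv e" "rv x = rv e \<longleftrightarrow> x = e" by (metis rv_rv)+
    thus "chi e (rv x) = - chi e x" by (simp add: chi_def)
  qed
  ultimately show ?thesis unfolding Wv_def by blast
qed

lemma sum_ind: "finite A \<Longrightarrow> (\<Sum>x\<in>A. (if x = e then 1 else 0::real)) = (if e \<in> A then 1 else 0)"
  by (simp add: sum.delta')

lemma sum_chi: "finite A \<Longrightarrow> (\<Sum>x\<in>A. chi e x) = (if e \<in> A then 1 else 0) - (if rv e \<in> A then 1 else 0)"
  unfolding chi_def by (simp add: sum_subtractf sum.delta')

lemma dv_chi: assumes "(p, r) \<in> D"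
  shows "dv (chi (p, r)) w = (if w = p then 1 else 0) - (if w = r then 1 else 0)"
proof -
  have "dv (chi (p, r)) w = (\<Sum>u\<in>nbrs adj w. (if (w, u) = (p, r) then 1 else 0)) -
      (\<Sum>u\<in>nbrs adj w. (if (w, u) = (r, p) then 1 else 0))"
    unfolding dv_def chi_def by (simp add: sum_subtractf)
  also have "(\<Sum>u\<in>nbrs adj w. (if (w, u) = (p, r) then 1 else (0::real))) = (if w = p then 1 else 0)"
  proof (cases "w = p")
    case True
    have "r \<in> nbrs adj p" using assms by (simp add: D_iff nbrs_iff)
    thus ?thesis using True finite_nbrs by (simp add: sum.delta')
  qed simp
  also have "(\<Sum>u\<in>nbrs adj w. (if (w, u) = (r, p) then 1 else (0::real))) = (if w = r then 1 else 0)"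
  proof (cases "w = r")
    case True
    have "p \<in> nbrs adj r" using assms adj_sym by (simp add: D_iff nbrs_iff)
    thus ?thesis using True finite_nbrs by (simp add: sum.delta')
  qed simp
  finally show ?thesis .
qed

lemma conn1: "v \<in> {1..n} \<Longrightarrow> w \<in> {1..n} \<Longrightarrow> (v, w) \<in> {(x, y). adj x y}\<^sup>*"
  using conn unfolding connected_graph_def by blast

lemma n_ge1: "n \<ge> 1" using conn unfolding connected_graph_def by blast

lemma dual_ind:
  assumes P0: "P Fout" and step: "\<And>d. d \<in> D \<Longrightarrow> P (face d) \<Longrightarrow> P (face (rv d))"
    and d: "d \<in> D"
  shows "P (face d)"
proof -
  define X where "X = {d \<in> D. P (face d)}"
  have Xrv: "\<And>e. e \<in> X \<Longrightarrow> rv e \<in> X"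
  proof -
    fix e assume "e \<in> X"
    hence "e \<in> D" "P (face e)" by (auto simp: X_def)
    thus "rv e \<in> X" using step[of e] rv_D[of e] by (simp add: X_def)
  qed
  have out: "\<And>v x. (v, x) \<in> X \<Longrightarrow> (v, rot v x) \<in> X"
  proof -
    fix v x assume vx: "(v, x) \<in> X"
    hence xv: "(x, v) \<in> X" using Xrv[of "(v,x)"] by simp
    hence "(x, v) \<in> D" by (simp add: X_def)
    hence "fp (x, v) \<in> D" "face (fp (x, v)) = face (x, v)" using fp_D face_fp by blast+
    thus "(v, rot v x) \<in> X" using xv unfolding X_def by simp
  qed
  have outk: "\<And>v x k. (v, x) \<in> X \<Longrightarrow> (v, (rot v ^^ k) x) \<in> X"
  proof -
    fix v x k assume "(v, x) \<in> X"
    thus "(v, (rot v ^^ k) x) \<in> X" by (induction k) (auto intro: out)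
  qed
  have allout: "\<And>v x y. (v, x) \<in> X \<Longrightarrow> y \<in> nbrs adj v \<Longrightarrow> (v, y) \<in> X"
  proof -
    fix v x y assume vx: "(v, x) \<in> X" and y: "y \<in> nbrs adj v"
    have "x \<in> nbrs adj v" using vx by (simp add: X_def D_iff nbrs_iff)
    then obtain k where "(rot v ^^ k) x = y" using rot_cyc y by blast
    thus "(v, y) \<in> X" using outk[OF vx] by blast
  qed
  obtain d0 where d0: "d0 \<in> D" "Fout = face d0" using Fout_face' by blast
  have d0X: "d0 \<in> X" using d0 P0 by (simp add: X_def)
  define v0 where "v0 = fst d0"
  have v0X: "(v0, snd d0) \<in> X" using d0X by (simp add: v0_def)
  have reach: "\<And>v. (v0, v) \<in> {(x, y). adj x y}\<^sup>* \<Longrightarrow> \<forall>y\<in>nbrs adj v. (v, y) \<in> X"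
  proof -
    fix v assume "(v0, v) \<in> {(x, y). adj x y}\<^sup>*"
    thus "\<forall>y\<in>nbrs adj v. (v, y) \<in> X"
    proof (induction rule: rtrancl_induct)
      case base then show ?case using allout v0X by blast
    next
      case (step u w)
      have "adj u w" using step(2) by simp
      hence "(u, w) \<in> X" using step(3) by (simp add: nbrs_iff)
      hence "(w, u) \<in> X" using Xrv[of "(u,w)"] by simp
      thus ?case using allout by blast
    qed
  qed
  have "fst d \<in> {1..n}" "v0 \<in> {1..n}" using d d0 adj_range by (auto simp: D_iff v0_def)
  hence "(v0, fst d) \<in> {(x, y). adj x y}\<^sup>*" using conn1 by blast
  moreover have "snd d \<in> nbrs adj (fst d)" using d by (simp add: D_iff nbrs_iff)
  ultimately have "(fst d, snd d) \<in> X" using reach by blast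
  thus ?thesis by (simp add: X_def)
qed

lemma bnd_zero_gen:
  assumes z: "\<And>x. x \<in> D \<Longrightarrow> bnd L x = 0" and L0: "L Fout = 0" and d: "d \<in> D"
  shows "L (face d) = 0"
proof (rule dual_ind[where P="\<lambda>g. L g = 0", OF L0 _ d])
  fix e assume e: "e \<in> D" "L (face e) = 0"
  have "bnd L e = 0" using z e by blast
  thus "L (face (rv e)) = 0" using e by (simp add: bnd_def)
qed

lemma bnd_zero:
  assumes z: "\<And>x. x \<in> D \<Longrightarrow> bnd (lam a) x = 0" and k: "k \<in> {1..c}"
  shows "a k = 0"
proof -
  obtain d where d: "d \<in> D" "F k = face d" using F_face[OF k] by blast
  have "lam a (face d) = 0" by (rule bnd_zero_gen[OF z lam_Fout d(1)])
  thus ?thesis using lam_F[OF k] d by simp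
qed

definition bF :: "nat \<Rightarrow> nat \<times> nat \<Rightarrow> real" where
  "bF k = bnd (lam (\<lambda>j. if j = k then 1 else 0))"

lemma lam_delta: "k \<in> {1..c} \<Longrightarrow> lam (\<lambda>j. if j = k then 1 else 0) g = (if g = F k then 1 else 0)"
proof -
  assume k: "k \<in> {1..c}"
  have "lam (\<lambda>j. if j = k then 1 else 0) g = (\<Sum>j\<in>{1..c}. if j = k then (if g = F k then 1 else 0) else 0)"
    unfolding lam_def by (intro sum.cong) auto
  also have "\<dots> = (if g = F k then 1 else 0)" using k by (simp add: sum.delta)
  finally show ?thesis .
qed

lemma bnd_lin: "bnd (lam a) x = (\<Sum>k\<in>{1..c}. a k * bF k x)"
proof (cases "x \<in> D")
  case False then show ?thesis by (simp add: bnd_def bF_def)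
next
  case True
  have "(\<Sum>k\<in>{1..c}. a k * bF k x) =
     (\<Sum>k\<in>{1..c}. (if face x = F k then a k else 0) - (if face (rv x) = F k then a k else 0))"
    using True by (intro sum.cong) (auto simp: bF_def bnd_def lam_delta)
  also have "\<dots> = bnd (lam a) x" using True by (simp add: sum_subtractf bnd_def lam_def)
  finally show ?thesis by simp
qed

lemma bF_W: "Wv (bF k)" by (simp add: bF_def bnd_W)
lemma bF_div: "dv (bF k) w = 0" by (simp add: bF_def bnd_div)

end

context pl begin

lemma conn_prop:
  assumes P1: "P 1" and st: "\<And>a b. adj a b \<Longrightarrow> P a \<Longrightarrow> P b" and w: "w \<in> {1..n}"
  shows "P w"
proof -
  have "1 \<in> {1..n}" using n_ge1 by simp
  hence "(1, w) \<in> {(x, y). adj x y}\<^sup>*" using conn1 w by blast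
  thus ?thesis
  proof (induction rule: rtrancl_induct)
    case base then show ?case using P1 .
  next
    case (step u v) then show ?case using st[of u v] by simp
  qed
qed

lemma W_add: assumes "Wv \<phi>" "Wv \<psi>" shows "Wv (\<lambda>x. \<phi> x + \<psi> x)"
proof -
  have "\<And>x. x \<notin> D \<Longrightarrow> \<phi> x + \<psi> x = 0"
  proof -
    fix x assume "x \<notin> D"
    hence "\<phi> x = 0" "\<psi> x = 0" using assms unfolding Wv_def by blast+
    thus "\<phi> x + \<psi> x = 0" by simp
  qed
  moreover have "\<And>x. \<phi> (rv x) + \<psi> (rv x) = - (\<phi> x + \<psi> x)"
  proof -
    fix x
    have "\<phi> (rv x) = - \<phi> x" "\<psi> (rv x) = - \<psi> x" using assms unfolding Wv_def by blast+
    thus "\<phi> (rv x) + \<psi> (rv x) = - (\<phi> x + \<psi> x)" by simp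
  qed
  ultimately show ?thesis unfolding Wv_def by blast
qed

lemma dv_add: "dv (\<lambda>x. \<phi> x + \<psi> x) w = dv \<phi> w + dv \<psi> w"
  unfolding dv_def by (simp add: sum.distrib)

lemma pathflow:
  assumes v: "v \<in> {1..n}"
  shows "\<exists>\<phi>. Wv \<phi> \<and> (\<forall>w. dv \<phi> w = (if w = v then 1 else 0) - (if w = 1 then 1 else 0))"
proof (rule conn_prop[where P="\<lambda>v. \<exists>\<phi>. Wv \<phi> \<and> (\<forall>w. dv \<phi> w = (if w = v then 1 else 0) - (if w = 1 then 1 else 0))", OF _ _ v])
  show "\<exists>\<phi>. Wv \<phi> \<and> (\<forall>w. dv \<phi> w = (if w = 1 then 1 else 0) - (if w = 1 then 1 else 0))"
    by (rule exI[of _ "\<lambda>_. 0"]) (simp add: Wv_def dv_def)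
next
  fix a b assume ab: "adj a b" and
    "\<exists>\<phi>. Wv \<phi> \<and> (\<forall>w. dv \<phi> w = (if w = a then 1 else 0) - (if w = 1 then 1 else 0))"
  then obtain \<phi> where \<phi>: "Wv \<phi>" "\<forall>w. dv \<phi> w = (if w = a then 1 else 0) - (if w = 1 then 1 else 0)" by blast
  have baD: "(b, a) \<in> D" using ab adj_sym by (simp add: D_iff)
  have "Wv (\<lambda>x. \<phi> x + chi (b, a) x)" using W_add[OF \<phi>(1) chi_W[OF baD]] .
  moreover have "\<forall>w. dv (\<lambda>x. \<phi> x + chi (b, a) x) w = (if w = b then 1 else 0) - (if w = 1 then 1 else 0)"
    using \<phi>(2) dv_chi[OF baD] by (simp add: dv_add)
  ultimately show "\<exists>\<phi>. Wv \<phi> \<and> (\<forall>w. dv \<phi> w = (if w = b then 1 else 0) - (if w = 1 then 1 else 0))" by blast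
qed

definition "II = {0..c} <+> {2..n}"

lemma finite_II: "finite II" by (simp add: II_def)

lemma sum_II: "(\<Sum>i\<in>II. f i) = f (Inl 0) + (\<Sum>k\<in>{1..c}. f (Inl k)) + (\<Sum>v\<in>{2..n}. f (Inr v))"
proof -
  have "(\<Sum>i\<in>II. f i) = (\<Sum>k\<in>{0..c}. f (Inl k)) + (\<Sum>v\<in>{2..n}. f (Inr v))"
    unfolding II_def by (simp add: sum.Plus)
  moreover have "{0..c} = insert 0 {1..c}" by auto
  ultimately show ?thesis by simp
qed

lemma card_II: "card II = card (edges adj) + 1"
proof -
  have "card II = card {0..c} + card {2..n}" unfolding II_def by (simp add: card_Plus)
  also have "\<dots> = c + n" using n_ge1 by simp
  finally show ?thesis using c_eq by simp
qed

lemma no_big_indep: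
  assumes W: "\<And>i. i \<in> II \<Longrightarrow> Wv (u i)"
    and ind: "\<And>a. (\<forall>x. (\<Sum>i\<in>II. a i * u i x) = 0) \<Longrightarrow> (\<forall>i\<in>II. a i = 0)"
  shows False
proof -
  have "card II \<le> card (chi ` Dp)"
    by (rule fam_bound[OF finite_II finite_chi W_span[OF W] ind])
  thus False using card_II card_chi by simp
qed

lemma cycle_space:
  assumes W: "Wv z" and dz: "\<And>w. dv z w = 0"
  shows "\<exists>a. \<forall>x. z x = bnd (lam a) x"
proof (rule ccontr)
  assume nz: "\<not> (\<exists>a. \<forall>x. z x = bnd (lam a) x)"
  have "\<forall>v\<in>{2..n}. \<exists>\<phi>. Wv \<phi> \<and> (\<forall>w. dv \<phi> w = (if w = v then 1 else 0) - (if w = 1 then 1 else 0))"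
    using pathflow by simp
  then obtain pf where pf: "\<And>v. v \<in> {2..n} \<Longrightarrow> Wv (pf v)"
    "\<And>v w. v \<in> {2..n} \<Longrightarrow> dv (pf v) w = (if w = v then 1 else 0) - (if w = 1 then 1 else 0)"
    by metis
  define u where "u i = (case i of Inl k \<Rightarrow> if k = 0 then z else bF k | Inr v \<Rightarrow> pf v)" for i
  show False
  proof (rule no_big_indep[of u])
    fix i assume "i \<in> II"
    thus "Wv (u i)" using W pf(1) bF_W by (auto simp: II_def u_def)
  next
    fix a assume A: "\<forall>x. (\<Sum>i\<in>II. a i * u i x) = 0"
    define a' where "a' k = a (Inl k)" for k
    have uk: "\<And>k. k \<in> {1..c} \<Longrightarrow> u (Inl k) = bF k" by (simp add: u_def)
    have u0: "u (Inl 0) = z" by (simp add: u_def)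
    have uv: "\<And>v. u (Inr v) = pf v" by (simp add: u_def)
    have dv0: "\<And>w. (\<Sum>i\<in>II. a i * dv (u i) w) = 0"
    proof -
      fix w
      have "(\<Sum>i\<in>II. a i * dv (u i) w) = dv (\<lambda>x. \<Sum>i\<in>II. a i * u i x) w"
        by (rule dv_sum[OF finite_II, symmetric])
      also have "\<dots> = 0" using A by (simp add: dv_def)
      finally show "(\<Sum>i\<in>II. a i * dv (u i) w) = 0" .
    qed
    have aInr: "\<And>w. w \<in> {2..n} \<Longrightarrow> a (Inr w) = 0"
    proof -
      fix w assume w: "w \<in> {2..n}"
      have "0 = (\<Sum>i\<in>II. a i * dv (u i) w)" using dv0 by simp
      also have "\<dots> = a (Inl 0) * dv z w + (\<Sum>k\<in>{1..c}. a (Inl k) * dv (bF k) w) +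
          (\<Sum>v\<in>{2..n}. a (Inr v) * ((if w = v then 1 else 0) - (if w = 1 then 1 else 0)))"
        unfolding sum_II u0 uv using uk pf(2) by (intro arg_cong2[where f="(+)"] sum.cong refl) auto
      also have "\<dots> = (\<Sum>v\<in>{2..n}. a (Inr v) * ((if w = v then 1 else 0) - (if w = 1 then 1 else 0)))"
        using dz bF_div by simp
      also have "\<dots> = (\<Sum>v\<in>{2..n}. if v = w then a (Inr v) else 0)"
        using w by (intro sum.cong) auto
      also have "\<dots> = a (Inr w)" using w by (simp add: sum.delta')
      finally show "a (Inr w) = 0" by simp
    qed
    have B: "\<And>x. a (Inl 0) * z x + bnd (lam a') x = 0"
    proof -
      fix x
      have "0 = (\<Sum>i\<in>II. a i * u i x)" using A[rule_format, of x] by simp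
      also have "\<dots> = a (Inl 0) * z x + (\<Sum>k\<in>{1..c}. a' k * bF k x) + (\<Sum>v\<in>{2..n}. 0)"
        unfolding sum_II u0 uv using uk aInr by (intro arg_cong2[where f="(+)"] sum.cong refl) (auto simp: a'_def)
      finally show "a (Inl 0) * z x + bnd (lam a') x = 0" by (simp add: bnd_lin)
    qed
    have a0: "a (Inl 0) = 0"
    proof (rule ccontr)
      assume ne: "a (Inl 0) \<noteq> 0"
      have "\<forall>x. z x = bnd (lam (\<lambda>k. - a' k / a (Inl 0))) x"
      proof
        fix x
        have "bnd (lam (\<lambda>k. - a' k / a (Inl 0))) x = - (\<Sum>k\<in>{1..c}. a' k * bF k x) / a (Inl 0)"
          by (simp add: bnd_lin sum_divide_distrib sum_negf)
        also have "\<dots> = z x" using B[of x] ne by (simp add: bnd_lin field_simps)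
        finally show "z x = bnd (lam (\<lambda>k. - a' k / a (Inl 0))) x" by simp
      qed
      thus False using nz by blast
    qed
    have a'0: "\<And>k. k \<in> {1..c} \<Longrightarrow> a' k = 0"
      using bnd_zero[of a'] B a0 by simp
    show "\<forall>i\<in>II. a i = 0"
    proof
      fix i assume "i \<in> II"
      thus "a i = 0"
      proof (cases i)
        case (Inl k) then show ?thesis using a0 a'0[of k] \<open>i \<in> II\<close> by (cases "k = 0") (auto simp: II_def a'_def)
      next
        case (Inr v) then show ?thesis using aInr[of v] \<open>i \<in> II\<close> by (auto simp: II_def)
      qed
    qed
  qed
qed

end

context pl begin

lemma Wv_out: "Wv \<phi> \<Longrightarrow> x \<notin> D \<Longrightarrow> \<phi> x = 0" unfolding Wv_def by blast
lemma Wv_rv: "Wv \<phi> \<Longrightarrow> \<phi> (rv x) = - \<phi> x" unfolding Wv_def by blast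

lemma rv_bij: "bij_betw rv D D"
proof -
  have "rv ` D = D"
  proof
    show "rv ` D \<subseteq> D" using rv_D by blast
    show "D \<subseteq> rv ` D"
    proof
      fix x assume "x \<in> D"
      hence "rv x \<in> D" by (rule rv_D)
      thus "x \<in> rv ` D" by (metis image_eqI rv_rv)
    qed
  qed
  moreover have "inj_on rv D" using inj_rv by (rule inj_on_subset) simp
  ultimately show ?thesis by (simp add: bij_betw_def)
qed

lemma sum_rv: "(\<Sum>d\<in>D. g (rv d)) = (\<Sum>d\<in>D. g d)"
  using sum.reindex_bij_betw[OF rv_bij, of g] by simp

lemma F_filter: "k \<in> {1..c} \<Longrightarrow> {d \<in> D. face d = F k} = F k"
  using in_F_iff by blast

lemma pair_lam: "(\<Sum>d\<in>D. X d * lam a (face d)) = (\<Sum>k\<in>{1..c}. a k * (\<Sum>d\<in>F k. X d))"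
proof -
  have "(\<Sum>d\<in>D. X d * lam a (face d)) = (\<Sum>d\<in>D. \<Sum>k\<in>{1..c}. (if face d = F k then a k * X d else 0))"
    unfolding lam_def sum_distrib_left by (intro sum.cong refl) auto
  also have "\<dots> = (\<Sum>k\<in>{1..c}. \<Sum>d\<in>D. (if face d = F k then a k * X d else 0))" by (rule sum.swap)
  also have "\<dots> = (\<Sum>k\<in>{1..c}. a k * (\<Sum>d\<in>F k. X d))"
  proof (rule sum.cong[OF refl])
    fix k assume k: "k \<in> {1..c}"
    have "(\<Sum>d\<in>D. (if face d = F k then a k * X d else 0)) = (\<Sum>d\<in>{d \<in> D. face d = F k}. a k * X d)"
      using finite_D by (simp add: sum.inter_filter)
    also have "\<dots> = a k * (\<Sum>d\<in>F k. X d)" using F_filter[OF k] by (simp add: sum_distrib_left)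
    finally show "(\<Sum>d\<in>D. (if face d = F k then a k * X d else 0)) = a k * (\<Sum>d\<in>F k. X d)" .
  qed
  finally show ?thesis .
qed

lemma pair_bnd:
  assumes X: "Wv X"
  shows "(\<Sum>d\<in>D. X d * bnd (lam a) d) = 2 * (\<Sum>k\<in>{1..c}. a k * (\<Sum>d\<in>F k. X d))"
proof -
  have "(\<Sum>d\<in>D. X d * bnd (lam a) d) =
      (\<Sum>d\<in>D. X d * lam a (face d)) - (\<Sum>d\<in>D. X d * lam a (face (rv d)))"
    unfolding sum_subtractf[symmetric] by (intro sum.cong refl) (simp add: bnd_def right_diff_distrib)
  also have "(\<Sum>d\<in>D. X d * lam a (face (rv d))) = (\<Sum>d\<in>D. X (rv d) * lam a (face d))"
    using sum_rv[of "\<lambda>d. X (rv d) * lam a (face d)"] by simp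
  also have "\<dots> = - (\<Sum>d\<in>D. X d * lam a (face d))"
    using Wv_rv[OF X] by (simp add: sum_negf)
  finally show ?thesis using pair_lam by simp
qed

lemma face_grad_sum: "k \<in> {1..c} \<Longrightarrow> (\<Sum>d\<in>F k. b (fst d) - b (snd d)) = (0::real)"
proof -
  assume k: "k \<in> {1..c}"
  obtain d0 where d0: "d0 \<in> D" "F k = face d0" using F_face[OF k] by blast
  show ?thesis using face_sum_fst_snd[OF d0(1), of b] d0(2) by (simp add: sum_subtractf)
qed

definition gr :: "nat \<Rightarrow> nat \<times> nat \<Rightarrow> real" where
  "gr v = (\<lambda>d. if d \<in> D then (if fst d = v then 1 else 0) - (if snd d = v then 1 else 0) else 0)"

lemma gr_W: "Wv (gr v)"
proof -
  have "\<And>x. x \<notin> D \<Longrightarrow> gr v x = 0" by (simp add: gr_def)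
  moreover have "\<And>x. gr v (rv x) = - gr v x" by (simp add: gr_def rv_D_iff) (simp add: rv_def)
  ultimately show ?thesis unfolding Wv_def by blast
qed

lemma exact:
  assumes W: "Wv \<omega>" and fs: "\<And>k. k \<in> {1..c} \<Longrightarrow> (\<Sum>d\<in>F k. \<omega> d) = 0"
  shows "\<exists>\<theta>. \<forall>d\<in>D. \<omega> d = \<theta> (fst d) - \<theta> (snd d)"
proof (rule ccontr)
  assume ne: "\<not> (\<exists>\<theta>. \<forall>d\<in>D. \<omega> d = \<theta> (fst d) - \<theta> (snd d))"
  define u where "u i = (case i of Inl k \<Rightarrow> if k = 0 then \<omega> else bF k | Inr v \<Rightarrow> gr v)" for i
  have uk: "\<And>k. k \<in> {1..c} \<Longrightarrow> u (Inl k) = bF k" by (simp add: u_def)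
  have u0: "u (Inl 0) = \<omega>" by (simp add: u_def)
  have uv: "\<And>v. u (Inr v) = gr v" by (simp add: u_def)
  show False
  proof (rule no_big_indep[of u])
    fix i assume "i \<in> II"
    thus "Wv (u i)" using W gr_W bF_W by (cases i) (auto simp: u_def)
  next
    fix a assume A: "\<forall>x. (\<Sum>i\<in>II. a i * u i x) = 0"
    define a' where "a' k = a (Inl k)" for k
    define b where "b w = (\<Sum>v\<in>{2..n}. a (Inr v) * (if w = v then 1 else 0))" for w
    define G where "G x = (if x \<in> D then b (fst x) - b (snd x) else 0)" for x
    define Y where "Y = bnd (lam a')"
    have Gsum: "\<And>x. (\<Sum>v\<in>{2..n}. a (Inr v) * gr v x) = G x"
    proof -
      fix x
      show "(\<Sum>v\<in>{2..n}. a (Inr v) * gr v x) = G x"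
      proof (cases "x \<in> D")
        case True
        have "(\<Sum>v\<in>{2..n}. a (Inr v) * gr v x) =
            (\<Sum>v\<in>{2..n}. a (Inr v) * (if fst x = v then 1 else 0) - a (Inr v) * (if snd x = v then 1 else 0))"
          using True by (intro sum.cong refl) (simp add: gr_def right_diff_distrib)
        also have "\<dots> = G x" using True by (simp add: G_def b_def sum_subtractf)
        finally show ?thesis .
      qed (simp add: gr_def G_def)
    qed
    have V: "\<And>x. a (Inl 0) * \<omega> x + Y x + G x = 0"
    proof -
      fix x
      have "0 = (\<Sum>i\<in>II. a i * u i x)" using A[rule_format, of x] by simp
      also have "\<dots> = a (Inl 0) * \<omega> x + (\<Sum>k\<in>{1..c}. a' k * bF k x) + (\<Sum>v\<in>{2..n}. a (Inr v) * gr v x)"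
        unfolding sum_II u0 uv using uk by (intro arg_cong2[where f="(+)"] sum.cong refl) (auto simp: a'_def)
      finally show "a (Inl 0) * \<omega> x + Y x + G x = 0" by (simp add: Y_def bnd_lin Gsum)
    qed
    have GW: "Wv G"
    proof -
      have "Wv (\<lambda>x. \<Sum>v\<in>{2..n}. a (Inr v) * gr v x)" by (rule W_sum) (auto simp: gr_W)
      thus ?thesis using Gsum by simp
    qed
    have YW: "Wv Y" by (simp add: Y_def bnd_W)
    have p\<omega>: "(\<Sum>d\<in>D. \<omega> d * Y d) = 0" unfolding Y_def pair_bnd[OF W] using fs by simp
    have pG: "(\<Sum>d\<in>D. G d * Y d) = 0"
    proof -
      have "\<And>k. k \<in> {1..c} \<Longrightarrow> (\<Sum>d\<in>F k. G d) = 0"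
      proof -
        fix k assume k: "k \<in> {1..c}"
        have "(\<Sum>d\<in>F k. G d) = (\<Sum>d\<in>F k. b (fst d) - b (snd d))"
          using k by (intro sum.cong refl) (simp add: G_def in_F_iff)
        thus "(\<Sum>d\<in>F k. G d) = 0" using face_grad_sum[OF k] by simp
      qed
      thus ?thesis unfolding Y_def pair_bnd[OF GW] by simp
    qed
    have "0 = (\<Sum>d\<in>D. (a (Inl 0) * \<omega> d + Y d + G d) * Y d)" using V by simp
    also have "\<dots> = a (Inl 0) * (\<Sum>d\<in>D. \<omega> d * Y d) + (\<Sum>d\<in>D. Y d * Y d) + (\<Sum>d\<in>D. G d * Y d)"
      by (simp add: distrib_right sum.distrib sum_distrib_left mult.assoc)
    finally have YY: "(\<Sum>d\<in>D. Y d * Y d) = 0" using p\<omega> pG by simp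
    have Y0: "\<And>x. x \<in> D \<Longrightarrow> Y x = 0"
    proof -
      fix x assume x: "x \<in> D"
      have "\<forall>d\<in>D. Y d * Y d = 0" using YY finite_D by (subst (asm) sum_nonneg_eq_0_iff) auto
      thus "Y x = 0" using x by simp
    qed
    have a'0: "\<And>k. k \<in> {1..c} \<Longrightarrow> a' k = 0" using bnd_zero[of a'] Y0 unfolding Y_def by blast
    have a0: "a (Inl 0) = 0"
    proof (rule ccontr)
      assume a0: "a (Inl 0) \<noteq> 0"
      have "\<forall>d\<in>D. \<omega> d = (- b (fst d) / a (Inl 0)) - (- b (snd d) / a (Inl 0))"
      proof
        fix d assume d: "d \<in> D"
        have "a (Inl 0) * \<omega> d + G d = 0" using V[of d] Y0[OF d] by simp
        thus "\<omega> d = (- b (fst d) / a (Inl 0)) - (- b (snd d) / a (Inl 0))"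
          using a0 d by (simp add: G_def field_simps)
      qed
      hence "\<exists>\<theta>. \<forall>d\<in>D. \<omega> d = \<theta> (fst d) - \<theta> (snd d)"
        by (intro exI[of _ "\<lambda>w. - b w / a (Inl 0)"]) simp
      thus False using ne by blast
    qed
    have bconst: "\<And>w. w \<in> {1..n} \<Longrightarrow> b w = b 1"
    proof -
      fix w assume w: "w \<in> {1..n}"
      show "b w = b 1"
      proof (rule conn_prop[where P="\<lambda>w. b w = b 1", OF refl _ w])
        fix p r assume pr: "adj p r" "b p = b 1"
        have "(p, r) \<in> D" using pr by (simp add: D_iff)
        hence "G (p, r) = 0" using V[of "(p,r)"] Y0 a0 by simp
        thus "b r = b 1" using pr \<open>(p, r) \<in> D\<close> by (simp add: G_def)
      qed
    qed
    have b1: "b 1 = 0" unfolding b_def by (intro sum.neutral) auto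
    have aInr: "\<And>v. v \<in> {2..n} \<Longrightarrow> a (Inr v) = 0"
    proof -
      fix v assume v: "v \<in> {2..n}"
      have "b v = (\<Sum>w\<in>{2..n}. if w = v then a (Inr w) else 0)"
        unfolding b_def by (intro sum.cong refl) auto
      also have "\<dots> = a (Inr v)" using v by (simp add: sum.delta')
      finally show "a (Inr v) = 0" using bconst[of v] b1 v by simp
    qed
    show "\<forall>i\<in>II. a i = 0"
    proof
      fix i assume "i \<in> II"
      thus "a i = 0"
      proof (cases i)
        case (Inl k) then show ?thesis using a0 a'0[of k] \<open>i \<in> II\<close> by (cases "k = 0") (auto simp: II_def a'_def)
      next
        case (Inr v) then show ?thesis using aInr[of v] \<open>i \<in> II\<close> by (auto simp: II_def)
      qed
    qed
  qed
qed

end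

lemma mod_Suc_lt: "i < L \<Longrightarrow> Suc i mod L = (if Suc i = L then 0 else Suc i)"
  by (simp add: mod_Suc)

lemma nx_inj: "i < L \<Longrightarrow> j < L \<Longrightarrow> Suc i mod L = Suc j mod L \<Longrightarrow> i = j"
  by (simp add: mod_Suc_lt split: if_splits)

lemma nx_lt: "i < L \<Longrightarrow> Suc i mod L < L" by simp

lemma nx2: "i < L \<Longrightarrow> 3 \<le> L \<Longrightarrow> Suc (Suc i mod L) mod L \<noteq> i"
proof -
  assume i: "i < L" and L: "3 \<le> L"
  have "Suc i mod L < L" using i by simp
  thus ?thesis using i L by (simp add: mod_Suc_lt split: if_splits)
qed

lemma nx_bij: "0 < L \<Longrightarrow> bij_betw (\<lambda>i. Suc i mod L) {..<L} {..<L}"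
proof -
  assume L: "0 < L"
  have inj: "inj_on (\<lambda>i. Suc i mod L) {..<L}" by (rule inj_onI) (auto intro: nx_inj)
  have sub: "(\<lambda>i. Suc i mod L) ` {..<L} \<subseteq> {..<L}" using L by auto
  show ?thesis using endo_inj_surj[OF _ sub inj] inj by (simp add: bij_betw_def)
qed

context pl begin

lemma Wv_zero: "Wv (\<lambda>_. 0)" by (simp add: Wv_def)

lemma chi_Ints: "chi e x \<in> \<int>" by (simp add: chi_def)

lemma int_w:
  assumes k: "k \<in> {1..c}"
  shows "\<exists>w. Wv w \<and> (\<forall>x. w x \<in> \<int>) \<and> (\<forall>j\<in>{1..c}. (\<Sum>d\<in>F j. w d) = (if j = k then 1 else 0))"
proof -
  obtain d0 where d0: "d0 \<in> D" "F k = face d0" using F_face[OF k] by blast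
  let ?P = "\<lambda>g. \<exists>w. Wv w \<and> (\<forall>x. w x \<in> \<int>) \<and> (\<forall>j\<in>{1..c}. (\<Sum>d\<in>F j. w d) = (if F j = g then 1 else 0))"
  have "?P (face d0)"
  proof (rule dual_ind[where P="?P", OF _ _ d0(1)])
    show "?P Fout"
      by (rule exI[of _ "\<lambda>_. 0"]) (use F_neq_Fout Wv_zero in auto)
  next
    fix d assume d: "d \<in> D" and "?P (face d)"
    then obtain w where w: "Wv w" "\<forall>x. w x \<in> \<int>" "\<forall>j\<in>{1..c}. (\<Sum>x\<in>F j. w x) = (if F j = face d then 1 else 0)"
      by blast
    have rd: "rv d \<in> D" using rv_D[OF d] .
    have "Wv (\<lambda>x. w x + chi (rv d) x)" using W_add[OF w(1) chi_W[OF rd]] .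
    moreover have "\<forall>x. w x + chi (rv d) x \<in> \<int>" using w(2) chi_Ints by (simp add: Ints_add)
    moreover have "\<forall>j\<in>{1..c}. (\<Sum>x\<in>F j. w x + chi (rv d) x) = (if F j = face (rv d) then 1 else 0)"
    proof
      fix j assume j: "j \<in> {1..c}"
      have "(\<Sum>x\<in>F j. w x + chi (rv d) x) = (\<Sum>x\<in>F j. w x) + (\<Sum>x\<in>F j. chi (rv d) x)"
        by (simp add: sum.distrib)
      also have "(\<Sum>x\<in>F j. chi (rv d) x) = (if rv d \<in> F j then 1 else 0) - (if d \<in> F j then 1 else 0)"
        using sum_chi[OF finite_F[OF j], of "rv d"] by simp
      also have "rv d \<in> F j \<longleftrightarrow> F j = face (rv d)" using in_F_iff[OF j, of "rv d"] rd by auto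
      also have "d \<in> F j \<longleftrightarrow> F j = face d" using in_F_iff[OF j, of d] d by auto
      finally show "(\<Sum>x\<in>F j. w x + chi (rv d) x) = (if F j = face (rv d) then 1 else 0)"
        using w(3) j by auto
    qed
    ultimately show "?P (face (rv d))" by blast
  qed
  then obtain w where w: "Wv w" "\<forall>x. w x \<in> \<int>" "\<forall>j\<in>{1..c}. (\<Sum>x\<in>F j. w x) = (if F j = face d0 then 1 else 0)"
    by blast
  have "\<forall>j\<in>{1..c}. (\<Sum>x\<in>F j. w x) = (if j = k then 1 else 0)"
    using w(3) d0(2) F_eq_iff[OF _ k] by auto
  thus ?thesis using w(1,2) by blast
qed

lemma no_bridge:
  assumes d: "d \<in> D"
  shows "face (rv d) \<noteq> face d"
proof -
  obtain p r where pr: "d = (p, r)" by fastforce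
  have adjpr: "adj p r" using d pr by (simp add: D_iff)
  then obtain vs where vs: "length vs \<ge> 3" "distinct vs"
      "\<forall>i<length vs. adj (vs ! i) (vs ! ((i + 1) mod length vs))"
      "\<exists>i<length vs. vs ! i = p \<and> vs ! ((i + 1) mod length vs) = r"
    using cyc unfolding every_edge_on_cycle_def edge_on_cycle_def by blast
  define L where "L = length vs"
  obtain i0 where i0: "i0 < L" "vs ! i0 = p" "vs ! (Suc i0 mod L) = r" using vs(4) by (auto simp: L_def)
  have L3: "3 \<le> L" using vs(1) by (simp add: L_def)
  have eD: "\<And>i. i < L \<Longrightarrow> (vs ! i, vs ! (Suc i mod L)) \<in> D" using vs(3) by (simp add: L_def D_iff)
  define z where "z x = (\<Sum>i<L. 1 * chi (vs ! i, vs ! (Suc i mod L)) x)" for x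
  have zW: "Wv z" unfolding z_def by (rule W_sum) (auto intro: chi_W eD)
  have zdv: "\<And>w. dv z w = 0"
  proof -
    fix w
    have "dv z w = (\<Sum>i<L. 1 * dv (chi (vs ! i, vs ! (Suc i mod L))) w)"
      unfolding z_def by (rule dv_sum) simp
    also have "\<dots> = (\<Sum>i<L. (if w = vs ! i then 1 else 0) - (if w = vs ! (Suc i mod L) then 1 else 0))"
      by (intro sum.cong refl) (simp add: dv_chi eD)
    also have "\<dots> = (\<Sum>i<L. (if w = vs ! i then 1 else 0)) - (\<Sum>i<L. (if w = vs ! (Suc i mod L) then 1 else 0))"
      by (simp add: sum_subtractf)
    also have "(\<Sum>i<L. (if w = vs ! (Suc i mod L) then 1 else (0::real))) = (\<Sum>i<L. (if w = vs ! i then 1 else 0))"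
      using sum.reindex_bij_betw[OF nx_bij, of L "\<lambda>i. if w = vs ! i then 1 else (0::real)"] L3 by simp
    finally show "dv z w = 0" by simp
  qed
  have zpr: "z (p, r) = 1"
  proof -
    have "z (p, r) = (\<Sum>i<L. (if (p, r) = (vs ! i, vs ! (Suc i mod L)) then 1 else 0) -
        (if (p, r) = (vs ! (Suc i mod L), vs ! i) then 1 else 0))"
      unfolding z_def chi_def by simp
    also have "\<dots> = (\<Sum>i<L. (if i = i0 then 1 else 0))"
    proof (rule sum.cong[OF refl])
      fix i assume i: "i \<in> {..<L}"
      have A: "(p, r) = (vs ! i, vs ! (Suc i mod L)) \<longleftrightarrow> i = i0"
      proof
        assume "(p, r) = (vs ! i, vs ! (Suc i mod L))"
        hence "vs ! i = vs ! i0" using i0 by simp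
        thus "i = i0" using vs(2) i i0(1) by (simp add: L_def nth_eq_iff_index_eq)
      qed (use i0 in simp)
      have B: "(p, r) \<noteq> (vs ! (Suc i mod L), vs ! i)"
      proof
        assume "(p, r) = (vs ! (Suc i mod L), vs ! i)"
        hence e1: "vs ! (Suc i mod L) = vs ! i0" and e2: "vs ! i = vs ! (Suc i0 mod L)" using i0 by auto
        have l1: "Suc i mod L < L" "Suc i0 mod L < L" using i i0(1) by auto
        have "Suc i mod L = i0" using e1 vs(2) l1 i0(1) by (simp add: L_def nth_eq_iff_index_eq)
        moreover have "i = Suc i0 mod L" using e2 vs(2) l1 i by (simp add: L_def nth_eq_iff_index_eq)
        ultimately show False using nx2[OF i0(1) L3] by simp
      qed
      show "(if (p, r) = (vs ! i, vs ! (Suc i mod L)) then 1 else 0) -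
        (if (p, r) = (vs ! (Suc i mod L), vs ! i) then 1 else (0::real)) = (if i = i0 then 1 else 0)"
        using A B by simp
    qed
    also have "\<dots> = 1" using i0(1) by simp
    finally show ?thesis .
  qed
  obtain a where a: "\<forall>x. z x = bnd (lam a) x" using cycle_space[OF zW zdv] by blast
  have "lam a (face d) - lam a (face (rv d)) = 1" using a zpr d pr by (simp add: bnd_def)
  thus ?thesis by auto
qed

end

lemma wrap_id: assumes "- pi < x" "x \<le> pi" shows "wrap x = x"
proof -
  have "(x - pi) / (2 * pi) \<le> 0" using assms pi_gt_zero by (intro divide_nonpos_pos) auto
  moreover have "-1 < (x - pi) / (2 * pi)" using assms pi_gt_zero by (simp add: field_simps)
  ultimately have "\<lceil>(x - pi) / (2 * pi)\<rceil> = 0" by (simp add: ceiling_eq_iff)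
  thus ?thesis by (simp add: wrap_def)
qed

lemma wrap_shift: "wrap (x + 2 * pi * of_int z) = wrap x"
proof -
  have "(x + 2 * pi * of_int z - pi) / (2 * pi) = (x - pi) / (2 * pi) + of_int z"
    using pi_gt_zero by (simp add: field_simps)
  hence "\<lceil>(x + 2 * pi * of_int z - pi) / (2 * pi)\<rceil> = \<lceil>(x - pi) / (2 * pi)\<rceil> + z" by simp
  thus ?thesis unfolding wrap_def by (simp add: algebra_simps)
qed

lemma wrap_diffZ: "\<exists>z::int. x = wrap x + 2 * pi * of_int z"
  by (rule exI[of _ "\<lceil>(x - pi) / (2 * pi)\<rceil>"]) (simp add: wrap_def)

lemma wrap_range: "- pi < wrap x \<and> wrap x \<le> pi"
proof -
  define t where "t = (x - pi) / (2 * pi)"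
  define k where "k = \<lceil>t\<rceil>"
  have x: "x = 2 * pi * t + pi" using pi_gt_zero by (simp add: t_def field_simps)
  have "of_int k - 1 < t" "t \<le> of_int k" by (auto simp: k_def ceiling_correct)
  moreover have "wrap x = 2 * pi * (t - of_int k) + pi" unfolding wrap_def k_def t_def[symmetric]
    using x by (simp add: algebra_simps)
  moreover have "2 * pi * (t - of_int k) \<le> 0" using \<open>t \<le> of_int k\<close> pi_gt_zero
    by (intro mult_nonneg_nonpos) auto
  moreover have "2 * pi * (-1) < 2 * pi * (t - of_int k)" using \<open>of_int k - 1 < t\<close> pi_gt_zero
    by (intro mult_strict_left_mono) auto
  ultimately show ?thesis by linarith
qed

lemma wrap_sin: "sin (wrap x) = sin x"
proof -
  obtain z where z: "x = wrap x + 2 * pi * of_int z" using wrap_diffZ by blast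
  have "sin x = sin (wrap x + 2 * pi * of_int z)" using z by simp
  also have "\<dots> = sin (wrap x)" by (simp add: sin_add)
  finally show ?thesis by simp
qed

lemma wrap_cos: "cos (wrap x) = cos x"
proof -
  obtain z where z: "x = wrap x + 2 * pi * of_int z" using wrap_diffZ by blast
  have "cos x = cos (wrap x + 2 * pi * of_int z)" using z by simp
  also have "\<dots> = cos (wrap x)" by (simp add: cos_add)
  finally show ?thesis by simp
qed

lemma wrap_eq_diff: "wrap x = wrap y \<Longrightarrow> \<exists>z::int. x - y = 2 * pi * of_int z"
proof -
  assume e: "wrap x = wrap y"
  obtain z1 where z1: "x = wrap x + 2 * pi * of_int z1" using wrap_diffZ by blast
  obtain z2 where z2: "y = wrap y + 2 * pi * of_int z2" using wrap_diffZ by blast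
  have "x - y = 2 * pi * of_int (z1 - z2)" using z1 z2 e by (simp add: algebra_simps)
  thus ?thesis by blast
qed

lemma wrap_neg: assumes "- pi < wrap x" "wrap x < pi" shows "wrap (- x) = - wrap x"
proof -
  obtain z where z: "x = wrap x + 2 * pi * of_int z" using wrap_diffZ by blast
  have "- x = - wrap x + 2 * pi * of_int (- z)" using z by simp
  hence "wrap (- x) = wrap (- wrap x)" using wrap_shift by metis
  also have "\<dots> = - wrap x" using assms by (intro wrap_id) auto
  finally show ?thesis .
qed

lemma borders_iff: "borders {a, b} X \<longleftrightarrow> (a, b) \<in> X \<or> (b, a) \<in> X"
  unfolding borders_def by (auto simp: doubleton_eq_iff)

context pl begin

definition dl :: "(nat \<Rightarrow> real) \<Rightarrow> nat \<times> nat \<Rightarrow> real" where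
  "dl \<epsilon> d = arcsin (lam \<epsilon> (face d) - lam \<epsilon> (face (rv d)))"

lemma finite_edges: "finite (edges adj)" using edges_D finite_D by simp

lemma edge_mem: "d \<in> D \<Longrightarrow> {fst d, snd d} \<in> edges adj" using edges_D by auto

lemma face_rv_cases:
  assumes d: "d \<in> D"
  shows "(face d = Fout \<and> (\<exists>k\<in>{1..c}. face (rv d) = F k)) \<or>
         (\<exists>k\<in>{1..c}. face d = F k \<and> face (rv d) = Fout) \<or>
         (\<exists>k\<in>{1..c}. \<exists>l\<in>{1..c}. k \<noteq> l \<and> face d = F k \<and> face (rv d) = F l)"
proof -
  have nb: "face (rv d) \<noteq> face d" using no_bridge[OF d] .
  have "face d = Fout \<or> (\<exists>k\<in>{1..c}. face d = F k)" using dart_face[OF d] .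
  moreover have "face (rv d) = Fout \<or> (\<exists>k\<in>{1..c}. face (rv d) = F k)" using dart_face[OF rv_D[OF d]] .
  ultimately show ?thesis using nb by metis
qed

lemma m_out_pos:
  assumes d: "d \<in> D" and k: "k \<in> {1..c}" and f1: "face d = F k" and f2: "face (rv d) = Fout"
  shows "m_out adj Fout F k > 0"
proof -
  have "d \<in> F k" using in_F_iff[OF k] d f1 by simp
  moreover have "rv d \<in> Fout" using in_Fout_iff rv_D[OF d] f2 by simp
  ultimately have "{fst d, snd d} \<in> {e \<in> edges adj. borders e (F k) \<and> borders e Fout}"
    using edge_mem[OF d] by (cases d) (simp add: borders_iff)
  moreover have "finite {e \<in> edges adj. borders e (F k) \<and> borders e Fout}" using finite_edges by simp
  ultimately show ?thesis unfolding m_out_def using card_gt_0_iff by blast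
qed

lemma m_pair_pos:
  assumes d: "d \<in> D" and k: "k \<in> {1..c}" and l: "l \<in> {1..c}" and f1: "face d = F k" and f2: "face (rv d) = F l"
  shows "m_pair adj F k l > 0"
proof -
  have "d \<in> F k" using in_F_iff[OF k] d f1 by simp
  moreover have "rv d \<in> F l" using in_F_iff[OF l] rv_D[OF d] f2 by simp
  ultimately have "{fst d, snd d} \<in> {e \<in> edges adj. borders e (F k) \<and> borders e (F l)}"
    using edge_mem[OF d] by (cases d) (simp add: borders_iff)
  moreover have "finite {e \<in> edges adj. borders e (F k) \<and> borders e (F l)}" using finite_edges by simp
  ultimately show ?thesis unfolding m_pair_def using card_gt_0_iff by blast
qed

lemma dl_bound:
  assumes \<epsilon>: "\<epsilon> \<in> domain_D adj Fout F c" and d: "d \<in> D"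
  shows "\<bar>lam \<epsilon> (face d) - lam \<epsilon> (face (rv d))\<bar> \<le> 1"
proof -
  have b1: "\<And>k. k \<in> {1..c} \<Longrightarrow> m_out adj Fout F k > 0 \<Longrightarrow> \<bar>\<epsilon> k\<bar> \<le> 1"
    using \<epsilon> unfolding domain_D_def by blast
  have b2: "\<And>k l. k \<in> {1..c} \<Longrightarrow> l \<in> {1..c} \<Longrightarrow> k \<noteq> l \<Longrightarrow> m_pair adj F k l > 0 \<Longrightarrow> \<bar>\<epsilon> k - \<epsilon> l\<bar> \<le> 1"
    using \<epsilon> unfolding domain_D_def by blast
  from face_rv_cases[OF d] show ?thesis
  proof (elim disjE conjE bexE)
    fix k assume k: "k \<in> {1..c}" and f1: "face d = Fout" and f2: "face (rv d) = F k"
    have "m_out adj Fout F k > 0" using m_out_pos[OF rv_D[OF d] k] f1 f2 by simp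
    thus ?thesis using b1[OF k] f1 f2 lam_F[OF k] lam_Fout by simp
  next
    fix k assume k: "k \<in> {1..c}" and f1: "face d = F k" and f2: "face (rv d) = Fout"
    have "m_out adj Fout F k > 0" using m_out_pos[OF d k f1 f2] .
    thus ?thesis using b1[OF k] f1 f2 lam_F[OF k] lam_Fout by simp
  next
    fix k l assume k: "k \<in> {1..c}" and l: "l \<in> {1..c}" and kl: "k \<noteq> l" and f1: "face d = F k" and f2: "face (rv d) = F l"
    have "m_pair adj F k l > 0" using m_pair_pos[OF d k l f1 f2] .
    thus ?thesis using b2[OF k l kl] f1 f2 lam_F[OF k] lam_F[OF l] by simp
  qed
qed

lemma dl_range: "\<epsilon> \<in> domain_D adj Fout F c \<Longrightarrow> d \<in> D \<Longrightarrow> - (pi / 2) \<le> dl \<epsilon> d \<and> dl \<epsilon> d \<le> pi / 2"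
  unfolding dl_def using dl_bound arcsin_bounded by (metis abs_le_iff minus_le_iff)

lemma dl_sin: "\<epsilon> \<in> domain_D adj Fout F c \<Longrightarrow> d \<in> D \<Longrightarrow> sin (dl \<epsilon> d) = lam \<epsilon> (face d) - lam \<epsilon> (face (rv d))"
  unfolding dl_def using dl_bound sin_arcsin by (metis abs_le_iff minus_le_iff)

lemma dl_rv: "\<epsilon> \<in> domain_D adj Fout F c \<Longrightarrow> d \<in> D \<Longrightarrow> dl \<epsilon> (rv d) = - dl \<epsilon> d"
proof -
  assume \<epsilon>: "\<epsilon> \<in> domain_D adj Fout F c" and d: "d \<in> D"
  have "dl \<epsilon> (rv d) = arcsin (- (lam \<epsilon> (face d) - lam \<epsilon> (face (rv d))))" by (simp add: dl_def)
  also have "\<dots> = - dl \<epsilon> d" unfolding dl_def using dl_bound[OF \<epsilon> d]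
    by (intro arcsin_minus) auto
  finally show ?thesis .
qed

lemma Delta_rv:
  assumes "- (pi / 2) \<le> Delta \<theta> a b" "Delta \<theta> a b \<le> pi / 2"
  shows "Delta \<theta> b a = - Delta \<theta> a b"
proof -
  have "- pi < wrap (\<theta> a - \<theta> b)" "wrap (\<theta> a - \<theta> b) < pi"
    using assms pi_gt_zero unfolding Delta_def by linarith+
  hence "wrap (- (\<theta> a - \<theta> b)) = - wrap (\<theta> a - \<theta> b)" by (rule wrap_neg)
  thus ?thesis unfolding Delta_def by simp
qed

lemma EC:
  assumes \<epsilon>: "\<epsilon> \<in> domain_D adj Fout F c"
  shows "edge_cond Fout F c \<epsilon> \<theta> \<longleftrightarrow> (\<forall>d\<in>D. Delta \<theta> (fst d) (snd d) = dl \<epsilon> d)"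
proof
  assume R: "\<forall>d\<in>D. Delta \<theta> (fst d) (snd d) = dl \<epsilon> d"
  show "edge_cond Fout F c \<epsilon> \<theta>"
    unfolding edge_cond_def
  proof (intro ballI, clarify)
    fix k a b assume k: "k \<in> {1..c}" and ab: "(a, b) \<in> F k"
    have abD: "(a, b) \<in> D" and fab: "face (a, b) = F k" using in_F_iff[OF k] ab by auto
    have baD: "(b, a) \<in> D" using rv_D[OF abD] by simp
    have "Delta \<theta> a b = dl \<epsilon> (a, b)" using bspec[OF R abD] by (simp only: fst_conv snd_conv)
    hence Dab: "Delta \<theta> a b = arcsin (\<epsilon> k - lam \<epsilon> (face (b, a)))"
      using fab lam_F[OF k] by (simp add: dl_def)
    have "borders {a, b} Fout \<longrightarrow> Delta \<theta> a b = arcsin (\<epsilon> k)"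
    proof
      assume "borders {a, b} Fout"
      hence "(a, b) \<in> Fout \<or> (b, a) \<in> Fout" by (simp add: borders_iff)
      moreover have "(a, b) \<notin> Fout" using in_Fout_iff fab F_neq_Fout[OF k] by simp
      ultimately have "face (b, a) = Fout" using in_Fout_iff by blast
      thus "Delta \<theta> a b = arcsin (\<epsilon> k)" using Dab lam_Fout by simp
    qed
    moreover have "\<forall>l\<in>{1..c}. l \<noteq> k \<and> borders {a, b} (F l) \<longrightarrow> Delta \<theta> a b = arcsin (\<epsilon> k - \<epsilon> l)"
    proof (intro ballI impI)
      fix l assume l: "l \<in> {1..c}" and lk: "l \<noteq> k \<and> borders {a, b} (F l)"
      hence "(a, b) \<in> F l \<or> (b, a) \<in> F l" by (simp add: borders_iff)
      moreover have "(a, b) \<notin> F l" using in_F_iff[OF l] fab F_eq_iff[OF k l] lk by auto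
      ultimately have "face (b, a) = F l" using in_F_iff[OF l] by blast
      thus "Delta \<theta> a b = arcsin (\<epsilon> k - \<epsilon> l)" using Dab lam_F[OF l] by simp
    qed
    ultimately show "(borders {a, b} Fout \<longrightarrow> Delta \<theta> a b = arcsin (\<epsilon> k)) \<and>
         (\<forall>l\<in>{1..c}. l \<noteq> k \<and> borders {a, b} (F l) \<longrightarrow> Delta \<theta> a b = arcsin (\<epsilon> k - \<epsilon> l))" by blast
  qed
next
  assume E: "edge_cond Fout F c \<epsilon> \<theta>"
  have E1: "\<And>k a b. k \<in> {1..c} \<Longrightarrow> (a, b) \<in> F k \<Longrightarrow> borders {a, b} Fout \<Longrightarrow> Delta \<theta> a b = arcsin (\<epsilon> k)"
    using E unfolding edge_cond_def by fast
  have E2: "\<And>k l a b. k \<in> {1..c} \<Longrightarrow> (a, b) \<in> F k \<Longrightarrow> l \<in> {1..c} \<Longrightarrow> l \<noteq> k \<Longrightarrow> borders {a, b} (F l) \<Longrightarrow>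
      Delta \<theta> a b = arcsin (\<epsilon> k - \<epsilon> l)"
    using E unfolding edge_cond_def by fast
  show "\<forall>d\<in>D. Delta \<theta> (fst d) (snd d) = dl \<epsilon> d"
  proof
    fix d assume d: "d \<in> D"
    obtain a b where ab: "d = (a, b)" by fastforce
    have abD: "(a, b) \<in> D" "(b, a) \<in> D" using d ab rv_D[OF d] by auto
    from face_rv_cases[OF d] show "Delta \<theta> (fst d) (snd d) = dl \<epsilon> d"
    proof (elim disjE conjE bexE)
      fix k assume k: "k \<in> {1..c}" and f1: "face d = Fout" and f2: "face (rv d) = F k"
      have "(b, a) \<in> F k" using in_F_iff[OF k] abD f2 ab by simp
      moreover have "borders {b, a} Fout" using in_Fout_iff abD f1 ab by (simp add: borders_iff)
      ultimately have Dba: "Delta \<theta> b a = arcsin (\<epsilon> k)" using E1[OF k] by blast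
      have "\<bar>\<epsilon> k\<bar> \<le> 1" using dl_bound[OF \<epsilon> d] f1 f2 lam_F[OF k] lam_Fout by simp
      hence r: "- (pi / 2) \<le> Delta \<theta> b a" "Delta \<theta> b a \<le> pi / 2" using Dba arcsin_bounded by auto
      have "Delta \<theta> a b = - arcsin (\<epsilon> k)" using Delta_rv[OF r] Dba by simp
      also have "\<dots> = dl \<epsilon> d" unfolding dl_def using f1 f2 lam_F[OF k] lam_Fout \<open>\<bar>\<epsilon> k\<bar> \<le> 1\<close>
        by (simp add: arcsin_minus)
      finally show ?thesis using ab by simp
    next
      fix k assume k: "k \<in> {1..c}" and f1: "face d = F k" and f2: "face (rv d) = Fout"
      have "(a, b) \<in> F k" using in_F_iff[OF k] abD f1 ab by simp
      moreover have "borders {a, b} Fout" using in_Fout_iff abD f2 ab by (simp add: borders_iff)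
      ultimately have "Delta \<theta> a b = arcsin (\<epsilon> k)" using E1[OF k] by blast
      thus ?thesis using ab f1 f2 lam_F[OF k] lam_Fout by (simp add: dl_def)
    next
      fix k l assume k: "k \<in> {1..c}" and l: "l \<in> {1..c}" and kl: "k \<noteq> l" and f1: "face d = F k" and f2: "face (rv d) = F l"
      have "(a, b) \<in> F k" using in_F_iff[OF k] abD f1 ab by simp
      moreover have "borders {a, b} (F l)" using in_F_iff[OF l] abD f2 ab by (simp add: borders_iff)
      ultimately have "Delta \<theta> a b = arcsin (\<epsilon> k - \<epsilon> l)" using E2[OF k _ l] kl by blast
      thus ?thesis using ab f1 f2 lam_F[OF k] lam_F[OF l] by (simp add: dl_def)
    qed
  qed
qed

end

context pl begin

lemma face_memb: "g \<in> faces adj rot \<Longrightarrow> x \<in> g \<longleftrightarrow> x \<in> D \<and> face x = g"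
  using faces_face face_set_iff by metis

lemma count_eq:
  assumes k: "k \<in> {1..c}" and g: "g \<in> faces adj rot" and gk: "g \<noteq> F k"
  shows "card {d \<in> F k. face (rv d) = g} = card {e \<in> edges adj. borders e (F k) \<and> borders e g}"
proof (rule bij_betw_same_card[of "\<lambda>d. {fst d, snd d}"])
  let ?A = "{d \<in> F k. face (rv d) = g}"
  let ?B = "{e \<in> edges adj. borders e (F k) \<and> borders e g}"
  have inj: "inj_on (\<lambda>d. {fst d, snd d}) ?A"
  proof (rule inj_onI)
    fix d d' assume d: "d \<in> ?A" and d': "d' \<in> ?A" and e: "{fst d, snd d} = {fst d', snd d'}"
    show "d = d'"
    proof (rule ccontr)
      assume ne: "d \<noteq> d'"
      hence "d' = rv d" using e by (cases d, cases d') (auto simp: doubleton_eq_iff)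
      hence "face (rv d') = F k" using d in_F_iff[OF k] by simp
      thus False using d' gk by simp
    qed
  qed
  have img: "(\<lambda>d. {fst d, snd d}) ` ?A = ?B"
  proof
    show "(\<lambda>d. {fst d, snd d}) ` ?A \<subseteq> ?B"
    proof
      fix e assume "e \<in> (\<lambda>d. {fst d, snd d}) ` ?A"
      then obtain d where d: "d \<in> F k" "face (rv d) = g" "e = {fst d, snd d}" by blast
      have dD: "d \<in> D" using d in_F_iff[OF k] by simp
      have "rv d \<in> g" using face_memb[OF g] rv_D[OF dD] d(2) by simp
      thus "e \<in> ?B" using d edge_mem[OF dD] by (cases d) (simp add: borders_iff)
    qed
  next
    show "?B \<subseteq> (\<lambda>d. {fst d, snd d}) ` ?A"
    proof
      fix e assume e: "e \<in> ?B"
      then obtain a b where ab: "(a, b) \<in> F k" "e = {a, b}" unfolding borders_def by blast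
      obtain a' b' where ab': "(a', b') \<in> g" "e = {a', b'}" using e unfolding borders_def by blast
      have abD: "(a, b) \<in> D" "face (a, b) = F k" using ab in_F_iff[OF k] by auto
      have "(a', b') = (a, b) \<or> (a', b') = (b, a)" using ab ab' by (auto simp: doubleton_eq_iff)
      moreover have "(a, b) \<notin> g" using face_memb[OF g] abD gk by auto
      ultimately have "(b, a) \<in> g" using ab' by auto
      hence "face (rv (a, b)) = g" using face_memb[OF g] by simp
      thus "e \<in> (\<lambda>d. {fst d, snd d}) ` ?A" using ab by (intro image_eqI[of _ _ "(a, b)"]) auto
    qed
  qed
  show "bij_betw (\<lambda>d. {fst d, snd d}) ?A ?B" using inj img by (simp add: bij_betw_def)
qed

lemma sum_count:
  assumes k: "k \<in> {1..c}"
  shows "(\<Sum>d\<in>F k. h (face (rv d))) = real (m_out adj Fout F k) * h Fout +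
     (\<Sum>l\<in>{1..c} - {k}. real (m_pair adj F k l) * h (F l))"
proof -
  let ?G = "insert Fout (F ` ({1..c} - {k}))"
  have fin: "finite (F k)" using finite_F[OF k] .
  have sub: "(\<lambda>d. face (rv d)) ` F k \<subseteq> ?G"
  proof
    fix g assume "g \<in> (\<lambda>d. face (rv d)) ` F k"
    then obtain d where d: "d \<in> F k" "g = face (rv d)" by blast
    have dD: "d \<in> D" "face d = F k" using d in_F_iff[OF k] by auto
    have "face (rv d) \<noteq> F k" using no_bridge[OF dD(1)] dD(2) by simp
    moreover have "face (rv d) = Fout \<or> (\<exists>l\<in>{1..c}. face (rv d) = F l)" using dart_face[OF rv_D[OF dD(1)]] .
    ultimately show "g \<in> ?G"
    proof (elim disjE bexE)
      assume "face (rv d) = Fout" thus "g \<in> ?G" using d(2) by simp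
    next
      fix l assume l: "l \<in> {1..c}" "face (rv d) = F l" and ne: "face (rv d) \<noteq> F k"
      hence "l \<noteq> k" by auto
      thus "g \<in> ?G" using l d(2) by auto
    qed
  qed
  have "(\<Sum>d\<in>F k. h (face (rv d))) = (\<Sum>g\<in>?G. \<Sum>d\<in>{d \<in> F k. face (rv d) = g}. h (face (rv d)))"
    using sum.group[OF fin _ sub, of "\<lambda>d. h (face (rv d))"] by simp
  also have "\<dots> = (\<Sum>g\<in>?G. real (card {d \<in> F k. face (rv d) = g}) * h g)"
    by (intro sum.cong refl) simp
  also have "\<dots> = real (card {d \<in> F k. face (rv d) = Fout}) * h Fout +
      (\<Sum>g\<in>F ` ({1..c} - {k}). real (card {d \<in> F k. face (rv d) = g}) * h g)"
  proof (rule sum.insert)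
    show "Fout \<notin> F ` ({1..c} - {k})"
    proof
      assume "Fout \<in> F ` ({1..c} - {k})"
      then obtain l where "l \<in> {1..c} - {k}" "Fout = F l" by blast
      thus False using F_neq_Fout[of l] by auto
    qed
  qed auto
  also have "(\<Sum>g\<in>F ` ({1..c} - {k}). real (card {d \<in> F k. face (rv d) = g}) * h g) =
      (\<Sum>l\<in>{1..c} - {k}. real (card {d \<in> F k. face (rv d) = F l}) * h (F l))"
    by (rule sum.reindex_cong[of F]) (use inj_on_subset[OF F_inj] in auto)
  also have "\<dots> = (\<Sum>l\<in>{1..c} - {k}. real (m_pair adj F k l) * h (F l))"
  proof (rule sum.cong[OF refl])
    fix l assume l: "l \<in> {1..c} - {k}"
    have "F l \<in> faces adj rot" using faces_eq l by auto
    moreover have "F l \<noteq> F k" using F_eq_iff[of l k] l k by auto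
    ultimately show "real (card {d \<in> F k. face (rv d) = F l}) * h (F l) = real (m_pair adj F k l) * h (F l)"
      using count_eq[OF k] by (simp add: m_pair_def)
  qed
  also have "card {d \<in> F k. face (rv d) = Fout} = m_out adj Fout F k"
    using count_eq[OF k Fout_face] F_neq_Fout[OF k] by (simp add: m_out_def)
  finally show ?thesis .
qed

lemma sum_dl:
  assumes \<epsilon>: "\<epsilon> \<in> domain_D adj Fout F c" and k: "k \<in> {1..c}"
  shows "(\<Sum>d\<in>F k. dl \<epsilon> d) = calA adj Fout F c \<epsilon> k"
proof -
  have "(\<Sum>d\<in>F k. dl \<epsilon> d) = (\<Sum>d\<in>F k. arcsin (\<epsilon> k - lam \<epsilon> (face (rv d))))"
    using in_F_iff[OF k] lam_F[OF k] by (intro sum.cong refl) (simp add: dl_def)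
  also have "\<dots> = real (m_out adj Fout F k) * arcsin (\<epsilon> k - lam \<epsilon> Fout) +
      (\<Sum>l\<in>{1..c} - {k}. real (m_pair adj F k l) * arcsin (\<epsilon> k - lam \<epsilon> (F l)))"
    by (rule sum_count[OF k])
  also have "(\<Sum>l\<in>{1..c} - {k}. real (m_pair adj F k l) * arcsin (\<epsilon> k - lam \<epsilon> (F l))) =
      (\<Sum>l\<in>{1..c} - {k}. real (m_pair adj F k l) * arcsin (\<epsilon> k - \<epsilon> l))"
    by (intro sum.cong refl) (auto simp: lam_F)
  also have "real (m_out adj Fout F k) * arcsin (\<epsilon> k - lam \<epsilon> Fout) = real (m_out adj Fout F k) * arcsin (\<epsilon> k)"
    by (simp add: lam_Fout)
  also have "real (m_out adj Fout F k) * arcsin (\<epsilon> k) +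
      (\<Sum>l\<in>{1..c} - {k}. real (m_pair adj F k l) * arcsin (\<epsilon> k - \<epsilon> l)) = calA adj Fout F c \<epsilon> k"
    by (simp add: calA_def)
  finally show ?thesis .
qed

lemma D_Sigma: "D = Sigma {1..n} (nbrs adj)"
  using adj_range by (auto simp: D_iff nbrs_iff)

lemma stable_of:
  assumes K: "K > 0" and cs: "\<And>a b. adj a b \<Longrightarrow> 0 \<le> cos (\<theta> a - \<theta> b)"
  shows "stable n adj K \<theta>"
  unfolding stable_def
proof
  fix x :: "nat \<Rightarrow> real"
  define w where "w i j = K * cos (\<theta> i - \<theta> j)" for i j
  define f where "f d = w (fst d) (snd d) * (x (fst d) * x (snd d) - x (fst d) * x (fst d))" for d
  have row: "\<And>i. i \<in> {1..n} \<Longrightarrow> (\<Sum>j\<in>{1..n}. x i * stab_matrix adj K \<theta> i j * x j) = (\<Sum>j\<in>nbrs adj i. f (i, j))"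
  proof -
    fix i assume i: "i \<in> {1..n}"
    have ni: "i \<notin> nbrs adj i" using adj_range by (auto simp: nbrs_iff)
    have A: "(\<Sum>j\<in>{1..n}. x i * stab_matrix adj K \<theta> i j * x j) =
        (\<Sum>j\<in>nbrs adj i. x i * stab_matrix adj K \<theta> i j * x j) + (\<Sum>j\<in>{1..n} - nbrs adj i. x i * stab_matrix adj K \<theta> i j * x j)"
      using nbrs_sub by (metis (no_types, lifting) add.commute finite_atLeastAtMost sum.subset_diff)
    have A2: "(\<Sum>j\<in>{1..n} - nbrs adj i. x i * stab_matrix adj K \<theta> i j * x j) = x i * stab_matrix adj K \<theta> i i * x i"
    proof -
      have "(\<Sum>j\<in>{1..n} - nbrs adj i. x i * stab_matrix adj K \<theta> i j * x j) = (\<Sum>j\<in>{i}. x i * stab_matrix adj K \<theta> i j * x j)"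
        by (rule sum.mono_neutral_right) (use i ni in \<open>auto simp: stab_matrix_def nbrs_iff\<close>)
      thus ?thesis by simp
    qed
    have C0: "stab_matrix adj K \<theta> i i = - (\<Sum>j\<in>nbrs adj i. w i j)"
      using ni by (simp add: stab_matrix_def nbrs_iff w_def)
    have C: "x i * stab_matrix adj K \<theta> i i * x i = - (\<Sum>j\<in>nbrs adj i. w i j * (x i * x i))"
    proof -
      have g: "\<And>s. x i * (- s) * x i = - (s * (x i * x i))" by (simp add: algebra_simps)
      show ?thesis unfolding C0 g by (simp add: sum_distrib_right)
    qed
    have B: "(\<Sum>j\<in>nbrs adj i. x i * stab_matrix adj K \<theta> i j * x j) = (\<Sum>j\<in>nbrs adj i. w i j * (x i * x j))"
      by (intro sum.cong refl) (simp add: stab_matrix_def nbrs_iff w_def)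
    have E: "(\<Sum>j\<in>nbrs adj i. f (i, j)) = (\<Sum>j\<in>nbrs adj i. w i j * (x i * x j)) - (\<Sum>j\<in>nbrs adj i. w i j * (x i * x i))"
      by (simp add: f_def right_diff_distrib sum_subtractf)
    show "(\<Sum>j\<in>{1..n}. x i * stab_matrix adj K \<theta> i j * x j) = (\<Sum>j\<in>nbrs adj i. f (i, j))"
      using A A2 B C E by linarith
  qed
  have "(\<Sum>i\<in>{1..n}. \<Sum>j\<in>{1..n}. x i * stab_matrix adj K \<theta> i j * x j) = (\<Sum>i\<in>{1..n}. \<Sum>j\<in>nbrs adj i. f (i, j))"
    by (rule sum.cong[OF refl]) (rule row)
  also have "\<dots> = (\<Sum>d\<in>D. f d)"
    unfolding D_Sigma by (subst sum.Sigma) (auto simp: finite_nbrs)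
  finally have T: "(\<Sum>i\<in>{1..n}. \<Sum>j\<in>{1..n}. x i * stab_matrix adj K \<theta> i j * x j) = (\<Sum>d\<in>D. f d)" .
  have wsym: "\<And>i j. w j i = w i j" unfolding w_def by (metis cos_minus minus_diff_eq)
  have "(\<Sum>d\<in>D. f d) = (\<Sum>d\<in>D. f (rv d))" using sum_rv[of f] by simp
  hence "2 * (\<Sum>d\<in>D. f d) = (\<Sum>d\<in>D. f d + f (rv d))" by (simp add: sum.distrib)
  also have "\<dots> = (\<Sum>d\<in>D. - (w (fst d) (snd d) * (x (fst d) - x (snd d))^2))"
    by (intro sum.cong refl) (simp add: f_def wsym rv_def power2_eq_square algebra_simps)
  also have "\<dots> \<le> 0"
  proof (rule sum_nonpos)
    fix d assume "d \<in> D"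
    hence "0 \<le> w (fst d) (snd d)" using cs K by (simp add: w_def D_iff)
    thus "- (w (fst d) (snd d) * (x (fst d) - x (snd d))^2) \<le> 0" by simp
  qed
  finally show "(\<Sum>i\<in>{1..n}. \<Sum>j\<in>{1..n}. x i * stab_matrix adj K \<theta> i j * x j) \<le> 0" using T by simp
qed

lemma fixed_of:
  assumes \<epsilon>: "\<epsilon> \<in> domain_D adj Fout F c" and R: "\<forall>d\<in>D. Delta \<theta> (fst d) (snd d) = dl \<epsilon> d"
  shows "fixed_point n adj \<theta>"
  unfolding fixed_point_def
proof
  fix i assume "i \<in> {1..n}"
  have "(\<Sum>j\<in>nbrs adj i. sin (\<theta> i - \<theta> j)) = (\<Sum>j\<in>nbrs adj i. bnd (lam \<epsilon>) (i, j))"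
  proof (rule sum.cong[OF refl])
    fix j assume j: "j \<in> nbrs adj i"
    hence ijD: "(i, j) \<in> D" by (simp add: nbrs_iff D_iff)
    have "sin (\<theta> i - \<theta> j) = sin (Delta \<theta> i j)" by (simp add: Delta_def wrap_sin)
    also have "\<dots> = sin (dl \<epsilon> (i, j))" using bspec[OF R ijD] by (simp only: fst_conv snd_conv)
    also have "\<dots> = bnd (lam \<epsilon>) (i, j)" using dl_sin[OF \<epsilon> ijD] ijD by (simp add: bnd_def)
    finally show "sin (\<theta> i - \<theta> j) = bnd (lam \<epsilon>) (i, j)" .
  qed
  also have "\<dots> = 0" using bnd_div[of "lam \<epsilon>" i] by (simp add: dv_def)
  finally show "(\<Sum>j\<in>nbrs adj i. sin (\<theta> i - \<theta> j)) = 0" .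
qed

end

context pl begin

lemma calQ_dom: "\<epsilon> \<in> calQ adj Fout F c q \<Longrightarrow> \<epsilon> \<in> domain_D adj Fout F c"
  by (simp add: calQ_def)

lemma calQ_A: "\<epsilon> \<in> calQ adj Fout F c q \<Longrightarrow> k \<in> {1..c} \<Longrightarrow> calA adj Fout F c \<epsilon> k = 2 * pi * of_int (q k)"
  by (simp add: calQ_def)

lemma Wv_intro: "(\<And>x. x \<notin> D \<Longrightarrow> \<phi> x = 0) \<Longrightarrow> (\<And>x. \<phi> (rv x) = - \<phi> x) \<Longrightarrow> Wv \<phi>"
  unfolding Wv_def by blast

lemma exist_theta:
  assumes \<epsilon>Q: "\<epsilon> \<in> calQ adj Fout F c q"
  shows "\<exists>\<theta>. \<forall>d\<in>D. Delta \<theta> (fst d) (snd d) = dl \<epsilon> d"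
proof -
  have \<epsilon>: "\<epsilon> \<in> domain_D adj Fout F c" using calQ_dom[OF \<epsilon>Q] .
  define dl' where "dl' d = (if d \<in> D then dl \<epsilon> d else 0)" for d
  have dlW: "Wv dl'"
  proof (rule Wv_intro)
    fix x show "x \<notin> D \<Longrightarrow> dl' x = 0" by (simp add: dl'_def)
    show "dl' (rv x) = - dl' x"
    proof (cases "x \<in> D")
      case True then show ?thesis using dl_rv[OF \<epsilon> True] rv_D[OF True] by (simp add: dl'_def)
    next
      case False then show ?thesis using rv_D_iff[of x] by (simp add: dl'_def)
    qed
  qed
  have fsum: "\<And>k. k \<in> {1..c} \<Longrightarrow> (\<Sum>d\<in>F k. dl' d) = 2 * pi * of_int (q k)"
  proof -
    fix k assume k: "k \<in> {1..c}"
    have "(\<Sum>d\<in>F k. dl' d) = (\<Sum>d\<in>F k. dl \<epsilon> d)"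
      using in_F_iff[OF k] by (intro sum.cong refl) (simp add: dl'_def)
    thus "(\<Sum>d\<in>F k. dl' d) = 2 * pi * of_int (q k)" using sum_dl[OF \<epsilon> k] calQ_A[OF \<epsilon>Q k] by simp
  qed
  have "\<forall>k\<in>{1..c}. \<exists>w. Wv w \<and> (\<forall>x. w x \<in> \<int>) \<and> (\<forall>j\<in>{1..c}. (\<Sum>d\<in>F j. w d) = (if j = k then 1 else 0))"
    using int_w by blast
  from bchoice[OF this] obtain Wk where Wk: "\<forall>k\<in>{1..c}. Wv (Wk k) \<and> (\<forall>x. Wk k x \<in> \<int>) \<and>
      (\<forall>j\<in>{1..c}. (\<Sum>d\<in>F j. Wk k d) = (if j = k then 1 else 0))" by blast
  define w where "w x = (\<Sum>k\<in>{1..c}. of_int (q k) * Wk k x)" for x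
  have wW: "Wv w" unfolding w_def by (rule W_sum) (use Wk in auto)
  have wZ: "\<And>x. w x \<in> \<int>" unfolding w_def using Wk by (intro Ints_sum Ints_mult) auto
  have wsum: "\<And>j. j \<in> {1..c} \<Longrightarrow> (\<Sum>d\<in>F j. w d) = of_int (q j)"
  proof -
    fix j assume j: "j \<in> {1..c}"
    have "(\<Sum>d\<in>F j. w d) = (\<Sum>k\<in>{1..c}. of_int (q k) * (\<Sum>d\<in>F j. Wk k d))"
      unfolding w_def by (simp add: sum_distrib_left sum.swap[of _ "F j"])
    also have "\<dots> = (\<Sum>k\<in>{1..c}. if k = j then of_int (q k) else 0)"
      using Wk j by (intro sum.cong refl) auto
    also have "\<dots> = of_int (q j)" using j by (simp add: sum.delta')
    finally show "(\<Sum>d\<in>F j. w d) = of_int (q j)" .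
  qed
  define \<omega> where "\<omega> x = dl' x - 2 * pi * w x" for x
  have \<omega>W: "Wv \<omega>"
  proof (rule Wv_intro)
    fix x
    show "x \<notin> D \<Longrightarrow> \<omega> x = 0" using Wv_out[OF dlW] Wv_out[OF wW] by (simp add: \<omega>_def)
    show "\<omega> (rv x) = - \<omega> x" using Wv_rv[OF dlW] Wv_rv[OF wW] by (simp add: \<omega>_def)
  qed
  have \<omega>sum: "\<And>k. k \<in> {1..c} \<Longrightarrow> (\<Sum>d\<in>F k. \<omega> d) = 0"
    using fsum wsum by (simp add: \<omega>_def sum_subtractf sum_distrib_left[symmetric])
  obtain \<theta> where \<theta>: "\<forall>d\<in>D. \<omega> d = \<theta> (fst d) - \<theta> (snd d)" using exact[OF \<omega>W \<omega>sum] by blast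
  have "\<forall>d\<in>D. Delta \<theta> (fst d) (snd d) = dl \<epsilon> d"
  proof
    fix d assume d: "d \<in> D"
    obtain z where z: "w d = of_int z" using wZ[of d] Ints_cases by metis
    have "\<theta> (fst d) - \<theta> (snd d) = dl \<epsilon> d + 2 * pi * of_int (- z)"
      using bspec[OF \<theta> d] d z by (simp add: \<omega>_def dl'_def)
    hence "Delta \<theta> (fst d) (snd d) = wrap (dl \<epsilon> d + 2 * pi * of_int (- z))" unfolding Delta_def by (simp only:)
    also have "\<dots> = wrap (dl \<epsilon> d)" by (rule wrap_shift)
    also have "\<dots> = dl \<epsilon> d" using dl_range[OF \<epsilon> d] pi_gt_zero by (intro wrap_id) linarith+
    finally show "Delta \<theta> (fst d) (snd d) = dl \<epsilon> d" .
  qed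
  thus ?thesis by blast
qed

lemma uniq:
  assumes R: "\<forall>d\<in>D. Delta \<theta>' (fst d) (snd d) = Delta \<theta> (fst d) (snd d)"
  shows "cfg_equiv n \<theta> \<theta>'"
proof -
  define g where "g v = \<theta>' v - \<theta> v" for v
  have gstep: "\<And>a b. adj a b \<Longrightarrow> \<exists>z::int. g a - g b = 2 * pi * of_int z"
  proof -
    fix a b assume "adj a b"
    hence "(a, b) \<in> D" by (simp add: D_iff)
    hence "wrap (\<theta>' a - \<theta>' b) = wrap (\<theta> a - \<theta> b)" using bspec[OF R] by (fastforce simp: Delta_def)
    then obtain z :: int where "(\<theta>' a - \<theta>' b) - (\<theta> a - \<theta> b) = 2 * pi * of_int z" using wrap_eq_diff by blast
    thus "\<exists>z::int. g a - g b = 2 * pi * of_int z" by (intro exI[of _ z]) (simp add: g_def algebra_simps)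
  qed
  have "\<And>v. v \<in> {1..n} \<Longrightarrow> \<exists>z::int. g v = g 1 + 2 * pi * of_int z"
  proof -
    fix v assume v: "v \<in> {1..n}"
    show "\<exists>z::int. g v = g 1 + 2 * pi * of_int z"
    proof (rule conn_prop[where P="\<lambda>v. \<exists>z::int. g v = g 1 + 2 * pi * of_int z", OF _ _ v])
      show "\<exists>z::int. g 1 = g 1 + 2 * pi * of_int z" by (rule exI[of _ 0]) simp
    next
      fix a b assume ab: "adj a b" and "\<exists>z::int. g a = g 1 + 2 * pi * of_int z"
      then obtain z1 :: int where z1: "g a = g 1 + 2 * pi * of_int z1" by blast
      obtain z2 :: int where z2: "g a - g b = 2 * pi * of_int z2" using gstep[OF ab] by blast
      have "g b = g 1 + 2 * pi * of_int (z1 - z2)" using z1 z2 by (simp add: algebra_simps)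
      thus "\<exists>z::int. g b = g 1 + 2 * pi * of_int z" by blast
    qed
  qed
  hence "\<forall>i\<in>{1..n}. \<exists>z::int. \<theta>' i = \<theta> i + g 1 + 2 * pi * of_int z" by (simp add: g_def algebra_simps)
  thus ?thesis unfolding cfg_equiv_def by blast
qed

lemma equiv_Delta:
  assumes E: "cfg_equiv n \<theta> \<theta>'" and d: "d \<in> D"
  shows "Delta \<theta>' (fst d) (snd d) = Delta \<theta> (fst d) (snd d)"
proof -
  obtain C where C: "\<forall>i\<in>{1..n}. \<exists>z::int. \<theta>' i = \<theta> i + C + 2 * pi * of_int z"
    using E unfolding cfg_equiv_def by blast
  have ab: "fst d \<in> {1..n}" "snd d \<in> {1..n}" using d adj_range by (auto simp: D_iff)
  obtain za :: int where za: "\<theta>' (fst d) = \<theta> (fst d) + C + 2 * pi * of_int za" using C ab(1) by blast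
  obtain zb :: int where zb: "\<theta>' (snd d) = \<theta> (snd d) + C + 2 * pi * of_int zb" using C ab(2) by blast
  have "\<theta>' (fst d) - \<theta>' (snd d) = (\<theta> (fst d) - \<theta> (snd d)) + 2 * pi * of_int (za - zb)"
    using za zb by (simp add: algebra_simps)
  hence "Delta \<theta>' (fst d) (snd d) = wrap ((\<theta> (fst d) - \<theta> (snd d)) + 2 * pi * of_int (za - zb))"
    unfolding Delta_def by (simp only:)
  also have "\<dots> = Delta \<theta> (fst d) (snd d)" unfolding Delta_def by (rule wrap_shift)
  finally show ?thesis .
qed

lemma winding_eq: "winding F \<theta> k = (\<Sum>d\<in>F k. Delta \<theta> (fst d) (snd d)) / (2 * pi)"
  by (simp add: winding_def case_prod_unfold)

lemma in_S:
  assumes K: "K > 0" and \<epsilon>Q: "\<epsilon> \<in> calQ adj Fout F c q" and R: "\<forall>d\<in>D. Delta \<theta> (fst d) (snd d) = dl \<epsilon> d"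
  shows "fixed_point n adj \<theta> \<and> stable n adj K \<theta> \<and> angles_bounded adj \<theta> \<and> has_winding c F \<theta> q"
proof -
  have \<epsilon>: "\<epsilon> \<in> domain_D adj Fout F c" using calQ_dom[OF \<epsilon>Q] .
  have Rab: "\<And>a b. adj a b \<Longrightarrow> Delta \<theta> a b = dl \<epsilon> (a, b)"
  proof -
    fix a b assume "adj a b"
    hence "(a, b) \<in> D" by (simp add: D_iff)
    thus "Delta \<theta> a b = dl \<epsilon> (a, b)" using bspec[OF R] by fastforce
  qed
  have rng: "\<And>a b. adj a b \<Longrightarrow> - (pi / 2) \<le> Delta \<theta> a b \<and> Delta \<theta> a b \<le> pi / 2"
    using Rab dl_range[OF \<epsilon>] by (simp add: D_iff)
  have "fixed_point n adj \<theta>" by (rule fixed_of[OF \<epsilon> R])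
  moreover have "stable n adj K \<theta>"
  proof (rule stable_of[OF K])
    fix a b assume ab: "adj a b"
    have "cos (\<theta> a - \<theta> b) = cos (Delta \<theta> a b)" by (simp add: Delta_def wrap_cos)
    thus "0 \<le> cos (\<theta> a - \<theta> b)" using rng[OF ab] cos_ge_zero by simp
  qed
  moreover have "angles_bounded adj \<theta>" unfolding angles_bounded_def using rng by blast
  moreover have "has_winding c F \<theta> q" unfolding has_winding_def
  proof
    fix k assume k: "k \<in> {1..c}"
    have "(\<Sum>d\<in>F k. Delta \<theta> (fst d) (snd d)) = (\<Sum>d\<in>F k. dl \<epsilon> d)"
      using in_F_iff[OF k] R by (intro sum.cong refl) auto
    also have "\<dots> = 2 * pi * of_int (q k)" using sum_dl[OF \<epsilon> k] calQ_A[OF \<epsilon>Q k] by simp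
    finally show "winding F \<theta> k = of_int (q k)" unfolding winding_eq by simp
  qed
  ultimately show ?thesis by blast
qed

lemma dart_of_m_out:
  assumes k: "k \<in> {1..c}" and m: "m_out adj Fout F k > 0"
  shows "\<exists>d\<in>D. face d = F k \<and> face (rv d) = Fout"
proof -
  obtain e where e: "e \<in> edges adj" "borders e (F k)" "borders e Fout"
    using m unfolding m_out_def by (metis (no_types, lifting) card.empty less_irrefl empty_Collect_eq)
  obtain a b where ab: "(a, b) \<in> F k" "e = {a, b}" using e(2) unfolding borders_def by blast
  obtain a' b' where ab': "(a', b') \<in> Fout" "e = {a', b'}" using e(3) unfolding borders_def by blast
  have abD: "(a, b) \<in> D" "face (a, b) = F k" using ab in_F_iff[OF k] by auto
  have "(a', b') = (a, b) \<or> (a', b') = (b, a)" using ab ab' by (auto simp: doubleton_eq_iff)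
  moreover have "(a, b) \<notin> Fout" using in_Fout_iff abD F_neq_Fout[OF k] by auto
  ultimately have "(b, a) \<in> Fout" using ab' by auto
  hence "face (rv (a, b)) = Fout" using in_Fout_iff by simp
  thus ?thesis using abD by blast
qed

lemma dart_of_m_pair:
  assumes k: "k \<in> {1..c}" and l: "l \<in> {1..c}" and kl: "k \<noteq> l" and m: "m_pair adj F k l > 0"
  shows "\<exists>d\<in>D. face d = F k \<and> face (rv d) = F l"
proof -
  obtain e where e: "e \<in> edges adj" "borders e (F k)" "borders e (F l)"
    using m unfolding m_pair_def by (metis (no_types, lifting) card.empty less_irrefl empty_Collect_eq)
  obtain a b where ab: "(a, b) \<in> F k" "e = {a, b}" using e(2) unfolding borders_def by blast
  obtain a' b' where ab': "(a', b') \<in> F l" "e = {a', b'}" using e(3) unfolding borders_def by blast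
  have abD: "(a, b) \<in> D" "face (a, b) = F k" using ab in_F_iff[OF k] by auto
  have "(a', b') = (a, b) \<or> (a', b') = (b, a)" using ab ab' by (auto simp: doubleton_eq_iff)
  moreover have "(a, b) \<notin> F l" using in_F_iff[OF l] abD F_eq_iff[OF k l] kl by auto
  ultimately have "(b, a) \<in> F l" using ab' by auto
  hence "face (rv (a, b)) = F l" using in_F_iff[OF l] by simp
  thus ?thesis using abD by blast
qed

end

context pl begin

lemma main:
  assumes K: "K > 0"
    and S_def: "S = {\<theta>. fixed_point n adj \<theta> \<and> stable n adj K \<theta> \<and> angles_bounded adj \<theta> \<and> has_winding c F \<theta> q}"
  shows "(\<forall>\<epsilon>\<in>calQ adj Fout F c q. \<exists>\<theta>. edge_cond Fout F c \<epsilon> \<theta> \<and>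
            (\<forall>\<theta>'. edge_cond Fout F c \<epsilon> \<theta>' \<longrightarrow> cfg_equiv n \<theta> \<theta>'))
       \<and> (\<forall>\<epsilon>\<in>calQ adj Fout F c q. \<forall>\<theta>. edge_cond Fout F c \<epsilon> \<theta> \<longrightarrow> \<theta> \<in> S)
       \<and> bij_betw (\<lambda>\<epsilon>. {\<theta>. edge_cond Fout F c \<epsilon> \<theta>}) (calQ adj Fout F c q) (S // cfg_rel n)"
proof -
  have ex: "\<And>\<epsilon>. \<epsilon> \<in> calQ adj Fout F c q \<Longrightarrow> \<exists>\<theta>. edge_cond Fout F c \<epsilon> \<theta>"
    using exist_theta EC calQ_dom by blast
  have un: "\<And>\<epsilon> \<theta> \<theta>'. \<epsilon> \<in> calQ adj Fout F c q \<Longrightarrow> edge_cond Fout F c \<epsilon> \<theta> \<Longrightarrow> edge_cond Fout F c \<epsilon> \<theta>' \<Longrightarrow> cfg_equiv n \<theta> \<theta>'"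
  proof -
    fix \<epsilon> \<theta> \<theta>' assume \<epsilon>: "\<epsilon> \<in> calQ adj Fout F c q" and e1: "edge_cond Fout F c \<epsilon> \<theta>" and e2: "edge_cond Fout F c \<epsilon> \<theta>'"
    have "\<forall>d\<in>D. Delta \<theta>' (fst d) (snd d) = Delta \<theta> (fst d) (snd d)"
      using e1 e2 EC[OF calQ_dom[OF \<epsilon>]] by simp
    thus "cfg_equiv n \<theta> \<theta>'" by (rule uniq)
  qed
  have inS: "\<And>\<epsilon> \<theta>. \<epsilon> \<in> calQ adj Fout F c q \<Longrightarrow> edge_cond Fout F c \<epsilon> \<theta> \<Longrightarrow> \<theta> \<in> S"
    using in_S[OF K] EC calQ_dom unfolding S_def by blast
  have cls: "\<And>\<epsilon> \<theta>0. \<epsilon> \<in> calQ adj Fout F c q \<Longrightarrow> edge_cond Fout F c \<epsilon> \<theta>0 \<Longrightarrow>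
      {\<theta>. edge_cond Fout F c \<epsilon> \<theta>} = cfg_rel n `` {\<theta>0}"
  proof -
    fix \<epsilon> \<theta>0 assume \<epsilon>: "\<epsilon> \<in> calQ adj Fout F c q" and e0: "edge_cond Fout F c \<epsilon> \<theta>0"
    show "{\<theta>. edge_cond Fout F c \<epsilon> \<theta>} = cfg_rel n `` {\<theta>0}"
    proof
      show "{\<theta>. edge_cond Fout F c \<epsilon> \<theta>} \<subseteq> cfg_rel n `` {\<theta>0}"
        using un[OF \<epsilon> e0] by (auto simp: cfg_rel_def)
    next
      show "cfg_rel n `` {\<theta>0} \<subseteq> {\<theta>. edge_cond Fout F c \<epsilon> \<theta>}"
      proof
        fix \<theta> assume "\<theta> \<in> cfg_rel n `` {\<theta>0}"
        hence eq: "cfg_equiv n \<theta>0 \<theta>" by (simp add: cfg_rel_def)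
        have "\<forall>d\<in>D. Delta \<theta>0 (fst d) (snd d) = dl \<epsilon> d" using e0 EC[OF calQ_dom[OF \<epsilon>]] by simp
        hence "\<forall>d\<in>D. Delta \<theta> (fst d) (snd d) = dl \<epsilon> d" using equiv_Delta[OF eq] by simp
        thus "\<theta> \<in> {\<theta>. edge_cond Fout F c \<epsilon> \<theta>}" using EC[OF calQ_dom[OF \<epsilon>]] by simp
      qed
    qed
  qed
  have P1: "\<forall>\<epsilon>\<in>calQ adj Fout F c q. \<exists>\<theta>. edge_cond Fout F c \<epsilon> \<theta> \<and>
            (\<forall>\<theta>'. edge_cond Fout F c \<epsilon> \<theta>' \<longrightarrow> cfg_equiv n \<theta> \<theta>')"
    using ex un by blast
  have P2: "\<forall>\<epsilon>\<in>calQ adj Fout F c q. \<forall>\<theta>. edge_cond Fout F c \<epsilon> \<theta> \<longrightarrow> \<theta> \<in> S" using inS by blast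
  have inj: "inj_on (\<lambda>\<epsilon>. {\<theta>. edge_cond Fout F c \<epsilon> \<theta>}) (calQ adj Fout F c q)"
  proof (rule inj_onI)
    fix \<epsilon>1 \<epsilon>2 assume e1: "\<epsilon>1 \<in> calQ adj Fout F c q" and e2: "\<epsilon>2 \<in> calQ adj Fout F c q"
      and eq: "{\<theta>. edge_cond Fout F c \<epsilon>1 \<theta>} = {\<theta>. edge_cond Fout F c \<epsilon>2 \<theta>}"
    obtain \<theta> where th: "edge_cond Fout F c \<epsilon>1 \<theta>" using ex[OF e1] by blast
    hence th2: "edge_cond Fout F c \<epsilon>2 \<theta>" using eq by blast
    have d1: "\<epsilon>1 \<in> domain_D adj Fout F c" and d2: "\<epsilon>2 \<in> domain_D adj Fout F c" using calQ_dom e1 e2 by auto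
    have same: "\<And>d. d \<in> D \<Longrightarrow> dl \<epsilon>1 d = dl \<epsilon>2 d" using th th2 EC[OF d1] EC[OF d2] by metis
    define L where "L g = lam \<epsilon>1 g - lam \<epsilon>2 g" for g
    have bz: "\<And>d. d \<in> D \<Longrightarrow> bnd L d = 0"
    proof -
      fix d assume d: "d \<in> D"
      have "sin (dl \<epsilon>1 d) = sin (dl \<epsilon>2 d)" using same[OF d] by simp
      thus "bnd L d = 0" using dl_sin[OF d1 d] dl_sin[OF d2 d] d by (simp add: bnd_def L_def)
    qed
    have L0: "L Fout = 0" by (simp add: L_def lam_Fout)
    show "\<epsilon>1 = \<epsilon>2"
    proof
      fix k show "\<epsilon>1 k = \<epsilon>2 k"
      proof (cases "k \<in> {1..c}")
        case True
        obtain d0 where d0: "d0 \<in> D" "F k = face d0" using F_face[OF True] by blast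
        have "L (face d0) = 0" by (rule bnd_zero_gen[OF bz L0 d0(1)])
        thus ?thesis using d0 lam_F[OF True] by (simp add: L_def)
      next
        case False
        thus ?thesis using d1 d2 unfolding domain_D_def by auto
      qed
    qed
  qed
  have img1: "(\<lambda>\<epsilon>. {\<theta>. edge_cond Fout F c \<epsilon> \<theta>}) ` calQ adj Fout F c q \<subseteq> S // cfg_rel n"
  proof
    fix X assume "X \<in> (\<lambda>\<epsilon>. {\<theta>. edge_cond Fout F c \<epsilon> \<theta>}) ` calQ adj Fout F c q"
    then obtain \<epsilon> where \<epsilon>: "\<epsilon> \<in> calQ adj Fout F c q" "X = {\<theta>. edge_cond Fout F c \<epsilon> \<theta>}" by blast
    obtain \<theta>0 where th: "edge_cond Fout F c \<epsilon> \<theta>0" using ex[OF \<epsilon>(1)] by blast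
    have "\<theta>0 \<in> S" using inS[OF \<epsilon>(1) th] .
    thus "X \<in> S // cfg_rel n" using cls[OF \<epsilon>(1) th] \<epsilon>(2) by (simp add: quotientI)
  qed
  have img2: "S // cfg_rel n \<subseteq> (\<lambda>\<epsilon>. {\<theta>. edge_cond Fout F c \<epsilon> \<theta>}) ` calQ adj Fout F c q"
  proof
    fix X assume "X \<in> S // cfg_rel n"
    then obtain \<theta> where th: "\<theta> \<in> S" and X: "X = cfg_rel n `` {\<theta>}" by (auto elim: quotientE)
    have fpt: "fixed_point n adj \<theta>" and ab: "angles_bounded adj \<theta>" and hw: "has_winding c F \<theta> q"
      using th unfolding S_def by auto
    define z where "z d = (if d \<in> D then sin (\<theta> (fst d) - \<theta> (snd d)) else 0)" for d
    have zW: "Wv z"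
    proof (rule Wv_intro)
      fix x
      show "x \<notin> D \<Longrightarrow> z x = 0" by (simp add: z_def)
      show "z (rv x) = - z x"
      proof (cases "x \<in> D")
        case True
        have "sin (\<theta> (snd x) - \<theta> (fst x)) = - sin (\<theta> (fst x) - \<theta> (snd x))"
          by (metis minus_diff_eq sin_minus)
        thus ?thesis using True rv_D[OF True] by (simp add: z_def rv_def)
      next
        case False thus ?thesis using rv_D_iff[of x] by (simp add: z_def)
      qed
    qed
    have zdv: "\<And>i. dv z i = 0"
    proof -
      fix i
      show "dv z i = 0"
      proof (cases "i \<in> {1..n}")
        case True
        have "dv z i = (\<Sum>j\<in>nbrs adj i. sin (\<theta> i - \<theta> j))"
          unfolding dv_def by (intro sum.cong refl) (simp add: z_def nbrs_iff D_iff)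
        thus ?thesis using fpt True unfolding fixed_point_def by simp
      next
        case False thus ?thesis by (simp add: dv_def nbrs_out)
      qed
    qed
    obtain a where a: "\<forall>x. z x = bnd (lam a) x" using cycle_space[OF zW zdv] by blast
    define \<epsilon> where "\<epsilon> k = (if k \<in> {1..c} then a k else 0)" for k
    have lam_eq: "lam \<epsilon> = lam a" unfolding lam_def \<epsilon>_def by (intro ext sum.cong refl) auto
    have bnd_d: "\<And>a' b'. adj a' b' \<Longrightarrow> - (pi / 2) \<le> Delta \<theta> a' b' \<and> Delta \<theta> a' b' \<le> pi / 2"
      using ab unfolding angles_bounded_def by blast
    have sinD: "\<And>d. d \<in> D \<Longrightarrow> sin (Delta \<theta> (fst d) (snd d)) = lam \<epsilon> (face d) - lam \<epsilon> (face (rv d))"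
    proof -
      fix d assume d: "d \<in> D"
      have "sin (Delta \<theta> (fst d) (snd d)) = z d" using d by (simp add: Delta_def wrap_sin z_def)
      also have "\<dots> = bnd (lam a) d" using a by blast
      also have "\<dots> = lam \<epsilon> (face d) - lam \<epsilon> (face (rv d))" using d lam_eq by (simp add: bnd_def)
      finally show "sin (Delta \<theta> (fst d) (snd d)) = lam \<epsilon> (face d) - lam \<epsilon> (face (rv d))" .
    qed
    have R: "\<forall>d\<in>D. Delta \<theta> (fst d) (snd d) = dl \<epsilon> d"
    proof
      fix d assume d: "d \<in> D"
      have "- (pi / 2) \<le> Delta \<theta> (fst d) (snd d) \<and> Delta \<theta> (fst d) (snd d) \<le> pi / 2"
        using bnd_d d by (simp add: D_iff)
      hence "arcsin (sin (Delta \<theta> (fst d) (snd d))) = Delta \<theta> (fst d) (snd d)" using arcsin_sin by blast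
      thus "Delta \<theta> (fst d) (snd d) = dl \<epsilon> d" using sinD[OF d] by (simp add: dl_def)
    qed
    have absb: "\<And>d. d \<in> D \<Longrightarrow> \<bar>lam \<epsilon> (face d) - lam \<epsilon> (face (rv d))\<bar> \<le> 1"
      using sinD abs_sin_le_one by metis
    have dom: "\<epsilon> \<in> domain_D adj Fout F c"
      unfolding domain_D_def
    proof (intro CollectI conjI ballI allI impI)
      fix k assume "k \<notin> {1..c}" thus "\<epsilon> k = 0" by (auto simp: \<epsilon>_def)
    next
      fix k assume k: "k \<in> {1..c}" and m: "0 < m_out adj Fout F k"
      obtain d where d: "d \<in> D" "face d = F k" "face (rv d) = Fout" using dart_of_m_out[OF k m] by blast
      show "\<bar>\<epsilon> k\<bar> \<le> 1" using absb[OF d(1)] d lam_F[OF k] lam_Fout by simp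
    next
      fix k l assume k: "k \<in> {1..c}" and l: "l \<in> {1..c}" and m: "k \<noteq> l \<and> 0 < m_pair adj F k l"
      obtain d where d: "d \<in> D" "face d = F k" "face (rv d) = F l" using dart_of_m_pair[OF k l conjunct1[OF m] conjunct2[OF m]] by blast
      show "\<bar>\<epsilon> k - \<epsilon> l\<bar> \<le> 1" using absb[OF d(1)] d lam_F[OF k] lam_F[OF l] by simp
    qed
    have \<epsilon>Q: "\<epsilon> \<in> calQ adj Fout F c q"
      unfolding calQ_def
    proof (intro CollectI conjI dom ballI)
      fix k assume k: "k \<in> {1..c}"
      have "calA adj Fout F c \<epsilon> k = (\<Sum>d\<in>F k. dl \<epsilon> d)" using sum_dl[OF dom k] by simp
      also have "\<dots> = (\<Sum>d\<in>F k. Delta \<theta> (fst d) (snd d))"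
        using in_F_iff[OF k] R by (intro sum.cong refl) auto
      also have "\<dots> = 2 * pi * winding F \<theta> k" unfolding winding_eq by simp
      also have "\<dots> = 2 * pi * of_int (q k)" using hw k unfolding has_winding_def by simp
      finally show "calA adj Fout F c \<epsilon> k = 2 * pi * of_int (q k)" .
    qed
    have "edge_cond Fout F c \<epsilon> \<theta>" using EC[OF dom] R by simp
    hence "X = {\<theta>. edge_cond Fout F c \<epsilon> \<theta>}" using cls[OF \<epsilon>Q] X by simp
    thus "X \<in> (\<lambda>\<epsilon>. {\<theta>. edge_cond Fout F c \<epsilon> \<theta>}) ` calQ adj Fout F c q" using \<epsilon>Q by blast
  qed
  have "bij_betw (\<lambda>\<epsilon>. {\<theta>. edge_cond Fout F c \<epsilon> \<theta>}) (calQ adj Fout F c q) (S // cfg_rel n)"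
    unfolding bij_betw_def using inj img1 img2 by blast
  thus ?thesis using P1 P2 by blast
qed

end

lemma degenerate:
  assumes simp: "simple_graph n adj" and conn: "connected_graph n adj"
    and pe: "plane_embedding n adj rot Fout c F" and emp: "darts adj = {}"
  shows "(\<forall>\<epsilon>\<in>calQ adj Fout F c q. \<exists>\<theta>. edge_cond Fout F c \<epsilon> \<theta> \<and>
            (\<forall>\<theta>'. edge_cond Fout F c \<epsilon> \<theta>' \<longrightarrow> cfg_equiv n \<theta> \<theta>'))
       \<and> (\<forall>\<epsilon>\<in>calQ adj Fout F c q. \<forall>\<theta>. edge_cond Fout F c \<epsilon> \<theta> \<longrightarrow>
            \<theta> \<in> {\<theta>. fixed_point n adj \<theta> \<and> stable n adj K \<theta> \<and> angles_bounded adj \<theta> \<and> has_winding c F \<theta> q})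
       \<and> bij_betw (\<lambda>\<epsilon>. {\<theta>. edge_cond Fout F c \<epsilon> \<theta>}) (calQ adj Fout F c q)
          ({\<theta>. fixed_point n adj \<theta> \<and> stable n adj K \<theta> \<and> angles_bounded adj \<theta> \<and> has_winding c F \<theta> q} // cfg_rel n)"
proof -
  have noadj: "\<And>a b. \<not> adj a b" using emp by (auto simp: darts_def)
  have E: "edges adj = {}" using noadj by (auto simp: edges_def)
  have R: "{(x, y). adj x y} = {}" using noadj by auto
  have n1: "n = 1"
  proof -
    have "n \<ge> 1" using conn unfolding connected_graph_def by blast
    moreover have "\<not> n \<ge> 2"
    proof
      assume "n \<ge> 2"
      hence "(1, 2) \<in> {(x, y). adj x y}\<^sup>*" using conn unfolding connected_graph_def by auto
      thus False using R by simp
    qed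
    ultimately show ?thesis by simp
  qed
  have c0: "c = 0" using pe E n1 unfolding plane_embedding_def by simp
  have nb: "\<And>i. nbrs adj i = {}" using noadj by (simp add: nbrs_def)
  have Q: "calQ adj Fout F c q = {\<lambda>_. 0}"
    using c0 by (auto simp: calQ_def domain_D_def)
  have ec: "\<And>\<epsilon> \<theta>. edge_cond Fout F c \<epsilon> \<theta>" using c0 by (simp add: edge_cond_def)
  have eqv: "\<And>\<theta> \<theta>'. cfg_equiv n \<theta> \<theta>'"
    unfolding cfg_equiv_def n1 by (rule_tac x="\<theta>' 1 - \<theta> 1" in exI) (auto intro: exI[of _ 0])
  let ?S = "{\<theta>. fixed_point n adj \<theta> \<and> stable n adj K \<theta> \<and> angles_bounded adj \<theta> \<and> has_winding c F \<theta> q}"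
  have SU: "?S = UNIV"
  proof -
    have "\<And>\<theta>. fixed_point n adj \<theta>" by (simp add: fixed_point_def nb)
    moreover have "\<And>\<theta>. stable n adj K \<theta>" by (simp add: stable_def n1 stab_matrix_def noadj nb)
    moreover have "\<And>\<theta>. angles_bounded adj \<theta>" by (simp add: angles_bounded_def noadj)
    moreover have "\<And>\<theta>. has_winding c F \<theta> q" by (simp add: has_winding_def c0)
    ultimately show ?thesis by blast
  qed
  have cls: "\<And>\<theta>. cfg_rel n `` {\<theta>} = UNIV" using eqv by (auto simp: cfg_rel_def)
  have quot: "?S // cfg_rel n = {UNIV}" unfolding SU quotient_def using cls by auto
  have all: "\<forall>\<theta>. fixed_point n adj \<theta> \<and> stable n adj K \<theta> \<and> angles_bounded adj \<theta> \<and> has_winding c F \<theta> q"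
    using SU by blast
  show ?thesis unfolding Q quot using ec eqv all by (simp add: bij_betw_def)
qed

theorem proposition1:
  fixes n c :: nat and adj :: "nat \<Rightarrow> nat \<Rightarrow> bool" and rot :: "nat \<Rightarrow> nat \<Rightarrow> nat"
    and Fout :: "(nat \<times> nat) set" and F :: "nat \<Rightarrow> (nat \<times> nat) set"
    and K :: real and q :: "nat \<Rightarrow> int"
  assumes "simple_graph n adj"
    and "connected_graph n adj"
    and "every_edge_on_cycle adj"
    and "rotation_system n adj rot"
    and "plane_embedding n adj rot Fout c F"
    and "K > 0"
  defines "S \<equiv> {\<theta>. fixed_point n adj \<theta> \<and> stable n adj K \<theta> \<and> angles_bounded adj \<theta>
                     \<and> has_winding c F \<theta> q}"
  shows "(\<forall>\<epsilon>\<in>calQ adj Fout F c q. \<exists>\<theta>. edge_cond Fout F c \<epsilon> \<theta> \<and>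
            (\<forall>\<theta>'. edge_cond Fout F c \<epsilon> \<theta>' \<longrightarrow> cfg_equiv n \<theta> \<theta>'))
       \<and> (\<forall>\<epsilon>\<in>calQ adj Fout F c q. \<forall>\<theta>. edge_cond Fout F c \<epsilon> \<theta> \<longrightarrow> \<theta> \<in> S)
       \<and> bij_betw (\<lambda>\<epsilon>. {\<theta>. edge_cond Fout F c \<epsilon> \<theta>}) (calQ adj Fout F c q) (S // cfg_rel n)"
proof (cases "darts adj = {}")
  case True
  show ?thesis unfolding S_def by (rule degenerate[OF assms(1,2,5) True])
next
  case False
  interpret pl n c adj rot Fout F
    using assms(1-5) False by (unfold_locales) auto
  show ?thesis unfolding S_def by (rule main[OF assms(6) refl])
qed

end
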